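(* Let $f(x,y)\in\mathbb{C}[x,y]$ be non-zero and let $L$ be the set of lower edges of $\mathrm{Newt}(f)$. Let $f^*(x,y):=\prod_{e\in L}f_e^*(x,y)$. Then for every $\phi\in[0,2\pi)$ there is $r_0>0$ such that for all $0<r<r_0$, $$\big|B(f(x,re^{\imath\phi}))-B(f^*(x,e^{\imath\phi}))\big|<1.$$
   Context: $\mathrm{Newt}(f)$ is the convex hull of $\mathrm{supp}(f)=\{(i,j):a_{i,j}\ne0\}$ for $f=\sum a_{i,j}x^iy^j$. An edge (one-dimensional face) $e$ of $\mathrm{Newt}(f)$, not parallel to the $y$-axis, is a lower edge if $\mathrm{Newt}(f)$ lies in the closed upper half-plane determined by the line through $e$. If $e$ connects vertices $(a,b)$ and $(a',b')$ with $a<a'$, set $f_e(x,y):=\sum_{(i,j)\in e}a_{i,j}x^iy^j$ and $f_e^*(x,y):=x^{-a}f_e(x,y)$. For a univariate complex polynomial $g$ with non-zero roots $r_1e^{\imath\phi_1},\dots,r_ne^{\imath\phi_n}$ (with multiplicity, $r_i>0$, $\phi_i\in[0,2\pi)$), $B(g):=\sup_{0\le\alpha\le\beta\le2\pi}\big|N_{\alpha,\beta}(g)-\frac{n(\beta-\alpha)}{2\pi}\big|$, where $N_{\alpha,\beta}(g)$ is the number of these roots with $\phi_i\in[\alpha,\beta]$. *)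

theory Defs
  imports "HOL-Analysis.Analysis" "HOL-Computational_Algebra.Polynomial"
begin

text \<open>A bivariate polynomial f(x,y) = sum a_ij x^i y^j over C is represented as
  a polynomial in x whose coefficients are polynomials in y:
  a_ij = coeff (coeff f i) j.\<close>

definition supp2 :: "complex poly poly \<Rightarrow> (nat \<times> nat) set" where
  "supp2 f = {(i, j). coeff (coeff f i) j \<noteq> 0}"

definition newt :: "complex poly poly \<Rightarrow> (real \<times> real) set" where
  "newt f = convex hull ((\<lambda>(i, j). (real i, real j)) ` supp2 f)"

definition lower_edges :: "complex poly poly \<Rightarrow> (real \<times> real) set set" where
  "lower_edges f = {e. e face_of newt f \<and> aff_dim e = 1 \<and>
      (\<exists>m c. (\<forall>p\<in>e. snd p = m * fst p + c) \<and> (\<forall>p\<in>newt f. snd p \<ge> m * fst p + c))}"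

definition edge_supp :: "complex poly poly \<Rightarrow> (real \<times> real) set \<Rightarrow> (nat \<times> nat) set" where
  "edge_supp f e = {(i, j). (i, j) \<in> supp2 f \<and> (real i, real j) \<in> e}"

text \<open>x-coordinate a of the left endpoint (a,b) of the edge e (a vertex of Newt(f),
  hence a support point).\<close>
definition edge_left :: "complex poly poly \<Rightarrow> (real \<times> real) set \<Rightarrow> nat" where
  "edge_left f e = Min (fst ` edge_supp f e)"

text \<open>f_e^*(x,y) = x^(-a) f_e(x,y).\<close>
definition edge_star :: "complex poly poly \<Rightarrow> (real \<times> real) set \<Rightarrow> complex poly poly" where
  "edge_star f e = (\<Sum>(i, j)\<in>edge_supp f e.
      monom (monom (coeff (coeff f i) j) j) (i - edge_left f e))"

definition fstar :: "complex poly poly \<Rightarrow> complex poly poly" where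
  "fstar f = (\<Prod>e\<in>lower_edges f. edge_star f e)"

definition eval_y :: "complex poly poly \<Rightarrow> complex \<Rightarrow> complex poly" where
  "eval_y f c = map_poly (\<lambda>q. poly q c) f"

definition nz_roots :: "complex poly \<Rightarrow> complex set" where
  "nz_roots g = {z. poly g z = 0 \<and> z \<noteq> 0}"

definition N_ang :: "real \<Rightarrow> real \<Rightarrow> complex poly \<Rightarrow> nat" where
  "N_ang \<alpha> \<beta> g = (\<Sum>z\<in>{z\<in>nz_roots g. \<alpha> \<le> Arg2pi z \<and> Arg2pi z \<le> \<beta>}. order z g)"

definition n_nz :: "complex poly \<Rightarrow> nat" where
  "n_nz g = (\<Sum>z\<in>nz_roots g. order z g)"

definition B :: "complex poly \<Rightarrow> real" where
  "B g = Sup {\<bar>real (N_ang \<alpha> \<beta> g) - real (n_nz g) * (\<beta> - \<alpha>) / (2 * pi)\<bar> | \<alpha> \<beta>.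
              0 \<le> \<alpha> \<and> \<alpha> \<le> \<beta> \<and> \<beta> \<le> 2 * pi}"

end

theory Submission
  imports Defs "HOL-Complex_Analysis.Complex_Analysis" "HOL-Computational_Algebra.Fundamental_Theorem_Algebra"
begin

definition Nm :: "real \<Rightarrow> real \<Rightarrow> complex multiset \<Rightarrow> nat" where
  "Nm a b X = size (filter_mset (\<lambda>z. a \<le> Arg2pi z \<and> Arg2pi z \<le> b) X)"

definition valset :: "complex multiset \<Rightarrow> real set" where
  "valset X = {\<bar>real (Nm a b X) - real (size X) * (b - a) / (2 * pi)\<bar> | a b.
              0 \<le> a \<and> a \<le> b \<and> b \<le> 2 * pi}"

definition Bm :: "complex multiset \<Rightarrow> real" where
  "Bm X = Sup (valset X)"

definition close :: "real \<Rightarrow> real \<Rightarrow> real \<Rightarrow> bool" where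
  "close e x y \<longleftrightarrow> (\<exists>k::int. \<bar>x - y - 2 * pi * of_int k\<bar> < e)"

lemma Nm_le_size: "Nm a b X \<le> size X"
  unfolding Nm_def by (rule size_filter_mset_lesseq)

lemma valset_bdd: "bdd_above (valset X)"
proof -
  have "v \<le> 2 * real (size X)" if "v \<in> valset X" for v
  proof -
    obtain a b where ab: "0 \<le> a" "a \<le> b" "b \<le> 2*pi"
      and v: "v = \<bar>real (Nm a b X) - real (size X) * (b - a) / (2 * pi)\<bar>"
      using \<open>v \<in> valset X\<close> unfolding valset_def by blast
    have "0 \<le> real (size X) * (b - a) / (2 * pi)" using ab by simp
    moreover have "real (size X) * (b - a) \<le> real (size X) * (2*pi)" using ab by (intro mult_left_mono) auto
    then have "real (size X) * (b - a) / (2 * pi) \<le> real (size X)" by (simp add: pos_divide_le_eq)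
    ultimately have "0 \<le> real (size X) * (b - a) / (2 * pi)" "real (size X) * (b - a) / (2 * pi) \<le> real (size X)" by auto
    moreover have "real (Nm a b X) \<le> real (size X)" using Nm_le_size by simp
    ultimately show ?thesis unfolding v by linarith
  qed
  then show ?thesis by (auto simp: bdd_above_def)
qed

lemma valset_ne: "\<bar>real (Nm 0 0 X)\<bar> \<in> valset X"
  unfolding valset_def by force

lemma val_le_Bm:
  assumes "0 \<le> a" "a \<le> b" "b \<le> 2*pi"
  shows "\<bar>real (Nm a b X) - real (size X) * (b - a) / (2 * pi)\<bar> \<le> Bm X"
  unfolding Bm_def by (rule cSup_upper[OF _ valset_bdd]) (use assms in \<open>auto simp: valset_def\<close>)

lemma Bm_nonneg: "0 \<le> Bm X"
proof -
  have "\<bar>real (Nm 0 0 X)\<bar> \<le> Bm X" unfolding Bm_def by (rule cSup_upper[OF valset_ne valset_bdd])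
  then show ?thesis by linarith
qed

lemma Bm_le_bound:
  assumes "\<And>a b. 0 \<le> a \<Longrightarrow> a \<le> b \<Longrightarrow> b \<le> 2*pi \<Longrightarrow>
            \<bar>real (Nm a b X) - real (size X) * (b - a) / (2 * pi)\<bar> \<le> C"
  shows "Bm X \<le> C"
  unfolding Bm_def
proof (rule cSup_least)
  show "valset X \<noteq> {}" using valset_ne by blast
  fix x assume "x \<in> valset X" then show "x \<le> C" using assms unfolding valset_def by blast
qed

lemma gap_core:
  assumes "e \<le> d" "d \<le> 2*pi - e"
  shows "e \<le> \<bar>d - 2*pi* of_int k\<bar>"
proof (cases "k \<le> 0")
  case True
  then have "2*pi* of_int k \<le> 0" by (simp add: mult_nonneg_nonpos)
  then show ?thesis using assms by linarith
next
  case False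
  then have "(1::real) \<le> of_int k" by simp
  then have "2*pi \<le> 2*pi* of_int k" using pi_gt_zero by simp
  then show ?thesis using assms by linarith
qed

lemma inside_core:
  assumes "\<bar>x - y - 2*pi* of_int k\<bar> < e" "e \<le> x" "x \<le> 2*pi - e" "0 \<le> y" "y < 2*pi"
  shows "\<bar>x - y\<bar> < e"
proof -
  consider "k = 0" | "k \<ge> 1" | "k \<le> -1" by linarith
  then show ?thesis
  proof cases
    case 1 then show ?thesis using assms by simp
  next
    case 2
    then have "(1::real) \<le> of_int k" by simp
    then have "2*pi \<le> 2*pi* of_int k" using pi_gt_zero by simp
    then show ?thesis using assms by linarith
  next
    case 3
    then have "of_int k \<le> (-1::real)" by simp
    then have "2*pi* of_int k \<le> -2*pi" using pi_gt_zero
      using mult_left_mono[of "of_int k" "-1::real" "2*pi"] by simp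
    then show ?thesis using assms by linarith
  qed
qed

lemma size_filter_image: "size (filter_mset P (image_mset f M)) = size (filter_mset (\<lambda>x. P (f x)) M)"
  by (induction M) auto

lemma size_filter_mono: "(\<And>x. x \<in># M \<Longrightarrow> P x \<Longrightarrow> Q x) \<Longrightarrow> size (filter_mset P M) \<le> size (filter_mset Q M)"
  by (induction M) (auto intro: le_SucI)

lemma size_filter_compl: "size (filter_mset P M) + size (filter_mset (\<lambda>x. \<not> P x) M) = size M"
  by (induction M) auto

lemma Arg2pi_range: "0 \<le> Arg2pi z" "Arg2pi z < 2*pi"
  by (auto simp: Arg2pi_ge_0 Arg2pi_lt_2pi)

lemma Bm_le:
  assumes A: "image_mset fst M = A" and H: "image_mset snd M = H"
    and cl: "\<And>p. p \<in># M \<Longrightarrow> close e (Arg2pi (fst p)) (Arg2pi (snd p))" and e: "e > 0"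
  shows "Bm A \<le> Bm H + real (size A) * e / pi"
proof (rule Bm_le_bound)
  fix a b :: real assume ab: "0 \<le> a" "a \<le> b" "b \<le> 2*pi"
  define n where "n = size A"
  have nH: "size H = n" "size M = n" using A H n_def by auto
  define F where "F = (\<lambda>P. size (filter_mset P M))"
  define AF where "AF = (\<lambda>p::complex\<times>complex. Arg2pi (fst p))"
  define AS where "AS = (\<lambda>p::complex\<times>complex. Arg2pi (snd p))"
  have NmA: "Nm x y A = F (\<lambda>p. x \<le> AF p \<and> AF p \<le> y)" for x y
    unfolding Nm_def F_def AF_def A[symmetric] size_filter_image ..
  have NmH: "Nm x y H = F (\<lambda>p. x \<le> AS p \<and> AS p \<le> y)" for x y
    unfolding Nm_def F_def AS_def H[symmetric] size_filter_image ..
  have clp: "\<exists>k::int. \<bar>AF p - AS p - 2 * pi * of_int k\<bar> < e" if "p \<in># M" for p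
    using cl[OF that] unfolding close_def AF_def AS_def .
  have rng: "0 \<le> AF p" "AF p < 2*pi" "0 \<le> AS p" "AS p < 2*pi" for p
    unfolding AF_def AS_def using Arg2pi_range by auto
  define K where "K = real n * e / pi"
  have K0: "0 \<le> K" unfolding K_def using e by simp
  have BH0: "0 \<le> Bm H" by (rule Bm_nonneg)
  define NA where "NA = real (Nm a b A)"
  define L where "L = b - a"
  have NA0: "0 \<le> NA" "NA \<le> real n" unfolding NA_def n_def using Nm_le_size by auto
  have nL0: "0 \<le> real n * L / (2*pi)" unfolding L_def using ab by simp
  have keq: "real n * (2*e) / (2*pi) = K" unfolding K_def by (simp add: field_simps)
  show "\<bar>real (Nm a b A) - real (size A) * (b - a) / (2 * pi)\<bar> \<le> Bm H + real (size A) * e / pi"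
  proof -
    have goal: "\<bar>NA - real n * L / (2 * pi)\<bar> \<le> Bm H + K"
    proof (cases "NA - real n * L / (2 * pi) \<ge> 0")
      case pos: True
      show ?thesis
      proof (cases "L \<ge> 2*pi - 2*e")
        case True
        have "real n * (2*pi - 2*e) \<le> real n * L" using True by (intro mult_left_mono) auto
        then have "real n * (2*pi - 2*e) / (2*pi) \<le> real n * L / (2*pi)" by (simp add: divide_right_mono)
        moreover have "real n * (2*pi - 2*e) / (2*pi) = real n - K" unfolding K_def by (simp add: field_simps)
        ultimately show ?thesis using pos NA0 BH0 by linarith
      next
        case Lsmall: False
        show ?thesis
        proof (cases "e \<le> a \<and> b \<le> 2*pi - e")
          case True
          have le: "F (\<lambda>p. a \<le> AF p \<and> AF p \<le> b) \<le> F (\<lambda>p. a - e \<le> AS p \<and> AS p \<le> b + e)"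
            unfolding F_def
          proof (rule size_filter_mono)
            fix p assume p: "p \<in># M" "a \<le> AF p \<and> AF p \<le> b"
            obtain k where k: "\<bar>AF p - AS p - 2 * pi * of_int k\<bar> < e" using clp[OF p(1)] by blast
            have "\<bar>AF p - AS p\<bar> < e" by (rule inside_core[OF k]) (use p True rng in auto)
            then show "a - e \<le> AS p \<and> AS p \<le> b + e" using p by linarith
          qed
          have "\<bar>real (Nm (a - e) (b + e) H) - real (size H) * ((b + e) - (a - e)) / (2 * pi)\<bar> \<le> Bm H"
            by (rule val_le_Bm) (use True ab e in auto)
          moreover have "real n * ((b + e) - (a - e)) / (2 * pi) = real n * L / (2*pi) + K"
            unfolding K_def L_def by (simp add: field_simps)
          ultimately show ?thesis using le pos K0 BH0 unfolding NmA[symmetric] NmH[symmetric] NA_def nH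
            by (smt (verit) of_nat_le_iff)
        next
          case False
          then consider "a < e" | "e \<le> a" "b > 2*pi - e" by linarith
          then obtain x y where xy: "0 \<le> x" "x \<le> y" "y \<le> 2*pi" "y - x = 2*pi - L - 2*e"
             and gap: "\<And>p. p \<in># M \<Longrightarrow> a \<le> AF p \<Longrightarrow> AF p \<le> b \<Longrightarrow> x \<le> AS p \<Longrightarrow> AS p \<le> y \<Longrightarrow> False"
          proof cases
            case 1
            show ?thesis
            proof (rule that[of "b + e" "2*pi + a - e"])
              fix p assume p: "p \<in># M" "a \<le> AF p" "AF p \<le> b" "b + e \<le> AS p" "AS p \<le> 2 * pi + a - e"
              obtain k where k: "\<bar>AF p - AS p - 2 * pi * of_int k\<bar> < e" using clp[OF p(1)] by blast
              have "e \<le> \<bar>(AS p - AF p) - 2*pi * of_int (-k)\<bar>" by (rule gap_core) (use p in auto)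
              then show False using k by (simp add: abs_minus_commute algebra_simps)
            qed (use 1 ab e Lsmall L_def in auto)
          next
            case 2
            show ?thesis
            proof (rule that[of "b + e - 2*pi" "a - e"])
              fix p assume p: "p \<in># M" "a \<le> AF p" "AF p \<le> b" "b + e - 2*pi \<le> AS p" "AS p \<le> a - e"
              obtain k where k: "\<bar>AF p - AS p - 2 * pi * of_int k\<bar> < e" using clp[OF p(1)] by blast
              have "e \<le> \<bar>(AF p - AS p) - 2*pi * of_int k\<bar>" by (rule gap_core) (use p in auto)
              then show False using k by simp
            qed (use 2 ab e Lsmall L_def in auto)
          qed
          have le: "F (\<lambda>p. x \<le> AS p \<and> AS p \<le> y) \<le> F (\<lambda>p. \<not> (a \<le> AF p \<and> AF p \<le> b))"
            unfolding F_def by (rule size_filter_mono) (use gap in blast)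
          have compl: "F (\<lambda>p. a \<le> AF p \<and> AF p \<le> b) + F (\<lambda>p. \<not> (a \<le> AF p \<and> AF p \<le> b)) = n"
            unfolding F_def using size_filter_compl nH by metis
          have "\<bar>real (Nm x y H) - real (size H) * (y - x) / (2 * pi)\<bar> \<le> Bm H"
            by (rule val_le_Bm) (use xy in auto)
          moreover have "real n * (y - x) / (2 * pi) = real n - real n * L / (2*pi) - K"
            unfolding xy(4) K_def by (simp add: field_simps)
          ultimately show ?thesis using le pos compl K0 BH0 unfolding NmA[symmetric] NmH[symmetric] NA_def nH
            by (smt (verit) of_nat_add of_nat_le_iff)
        qed
      qed
    next
      case neg: False
      show ?thesis
      proof (cases "L < 2*e")
        case True
        have "real n * L \<le> real n * (2*e)" using True by (intro mult_left_mono) auto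
        then have "real n * L / (2*pi) \<le> real n * (2*e) / (2*pi)" by (intro divide_right_mono) auto
        then show ?thesis using neg keq NA0 BH0 by linarith
      next
        case False
        have le: "F (\<lambda>p. a + e \<le> AS p \<and> AS p \<le> b - e) \<le> F (\<lambda>p. a \<le> AF p \<and> AF p \<le> b)"
          unfolding F_def
        proof (rule size_filter_mono)
          fix p assume p: "p \<in># M" "a + e \<le> AS p \<and> AS p \<le> b - e"
          obtain k where k: "\<bar>AF p - AS p - 2 * pi * of_int k\<bar> < e" using clp[OF p(1)] by blast
          have k': "\<bar>AS p - AF p - 2 * pi * of_int (-k)\<bar> < e" using k by (simp add: abs_minus_commute algebra_simps)
          have "\<bar>AS p - AF p\<bar> < e" by (rule inside_core[OF k']) (use p ab rng in auto)
          then show "a \<le> AF p \<and> AF p \<le> b" using p by linarith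
        qed
        have "\<bar>real (Nm (a + e) (b - e) H) - real (size H) * ((b - e) - (a + e)) / (2 * pi)\<bar> \<le> Bm H"
          by (rule val_le_Bm) (use False ab e L_def in auto)
        moreover have "real n * ((b - e) - (a + e)) / (2 * pi) = real n * L / (2*pi) - K"
          unfolding K_def L_def by (simp add: field_simps)
        ultimately show ?thesis using le neg K0 BH0 unfolding NmA[symmetric] NmH[symmetric] NA_def nH
          by (smt (verit) of_nat_le_iff)
      qed
    qed
    then show ?thesis unfolding NA_def L_def K_def n_def .
  qed
qed

lemma supp2_finite: "finite (supp2 f)"
proof -
  define D where "D = Max ((\<lambda>i. degree (coeff f i)) ` {..degree f})"
  have "supp2 f \<subseteq> {..degree f} \<times> {..D}"
  proof
    fix x assume "x \<in> supp2 f"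
    then obtain i j where x: "x = (i,j)" and nz: "coeff (coeff f i) j \<noteq> 0" by (auto simp: supp2_def)
    then have "coeff f i \<noteq> 0" by auto
    then have i: "i \<le> degree f" by (simp add: le_degree)
    have "j \<le> degree (coeff f i)" using nz by (simp add: le_degree)
    also have "\<dots> \<le> D" unfolding D_def using i by (intro Max_ge) auto
    finally show "x \<in> {..degree f} \<times> {..D}" using i x by auto
  qed
  then show ?thesis by (rule finite_subset) auto
qed

lemma supp_in_newt: "(i,j) \<in> supp2 f \<Longrightarrow> (real i, real j) \<in> newt f"
  unfolding newt_def by (rule hull_inc) force

lemma newt_above:
  assumes "\<And>i j. (i,j) \<in> supp2 f \<Longrightarrow> m * real i + c \<le> real j" "p \<in> newt f"
  shows "m * fst p + c \<le> snd p"
proof -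
  have "newt f \<subseteq> {x. inner (-m, 1::real) x \<ge> c}"
    unfolding newt_def
  proof (rule hull_minimal)
    show "(\<lambda>(i, j). (real i, real j)) ` supp2 f \<subseteq> {x. c \<le> inner (- m, 1) x}"
      by (force dest: assms(1) simp: inner_Pair)
  qed (rule convex_halfspace_ge)
  then show ?thesis using assms(2) by (cases p) (auto simp: inner_Pair)
qed

definition LEP :: "complex poly poly \<Rightarrow> (real \<times> real) set \<Rightarrow> real \<Rightarrow> real \<Rightarrow> bool" where
  "LEP f e m c \<longleftrightarrow> (\<forall>i j. (i,j) \<in> supp2 f \<longrightarrow> m * real i + c \<le> real j) \<and>
     e = newt f \<inter> {p. snd p = m * fst p + c} \<and>
     (\<exists>i1 j1 i2 j2. (i1,j1) \<in> supp2 f \<and> (i2,j2) \<in> supp2 f \<and> real j1 = m * real i1 + c \<and>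
        real j2 = m * real i2 + c \<and> i1 < i2)"

lemma convex_newt: "convex (newt f)" unfolding newt_def by simp

lemma LEP_lower:
  assumes "LEP f e m c"
  shows "e \<in> lower_edges f"
proof -
  have above: "\<And>i j. (i,j) \<in> supp2 f \<Longrightarrow> m * real i + c \<le> real j"
    and e: "e = newt f \<inter> {p. snd p = m * fst p + c}" using assms by (auto simp: LEP_def)
  obtain i1 j1 i2 j2 where pts: "(i1,j1) \<in> supp2 f" "(i2,j2) \<in> supp2 f" "real j1 = m * real i1 + c"
        "real j2 = m * real i2 + c" "i1 < i2" using assms unfolding LEP_def by blast
  have hyp: "{p. snd p = m * fst p + c} = {x. inner (m, -1::real) x = - c}"
    by (auto simp: inner_Pair)
  have face: "e face_of newt f"
    unfolding e hyp
  proof (rule face_of_Int_supporting_hyperplane_le[OF convex_newt])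
    fix x assume "x \<in> newt f"
    then have "m * fst x + c \<le> snd x" using newt_above[OF above] by blast
    then show "inner (m, - 1) x \<le> - c" by (cases x) (auto simp: inner_Pair)
  qed
  have "aff_dim e \<le> aff_dim {x. inner (m, -1::real) x = - c}"
    by (rule aff_dim_subset) (use e hyp in auto)
  also have "\<dots> = 1" using aff_dim_hyperplane[of "(m, -1::real)" "-c"] by (simp add: zero_prod_def)
  finally have le1: "aff_dim e \<le> 1" .
  have p1: "(real i1, real j1) \<in> e" and p2: "(real i2, real j2) \<in> e"
    using pts supp_in_newt[of i1 j1 f] supp_in_newt[of i2 j2 f] e by auto
  have ne: "(real i1, real j1) \<noteq> (real i2, real j2)" using pts by auto
  have "aff_dim e \<noteq> -1" using p1 by (auto simp: aff_dim_empty[symmetric])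
  moreover have "aff_dim e \<noteq> 0" using p1 p2 ne by (auto simp: aff_dim_eq_0)
  moreover have "aff_dim e \<ge> -1" by (rule aff_dim_geq)
  ultimately have "aff_dim e = 1" using le1 by linarith
  moreover have "\<forall>p\<in>e. snd p = m * fst p + c" using e by auto
  moreover have "\<forall>p\<in>newt f. snd p \<ge> m * fst p + c" using newt_above[OF above] by blast
  ultimately show ?thesis unfolding lower_edges_def using face by blast
qed

lemma lower_LEP:
  assumes "e \<in> lower_edges f"
  shows "\<exists>m c. LEP f e m c"
proof -
  obtain m c where face: "e face_of newt f" and ad: "aff_dim e = 1"
    and online: "\<forall>p\<in>e. snd p = m * fst p + c" and above: "\<forall>p\<in>newt f. snd p \<ge> m * fst p + c"
    using assms unfolding lower_edges_def by blast
  define G where "G = newt f \<inter> {p. snd p = m * fst p + c}"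
  have hyp: "{p. snd p = m * fst p + c} = {x. inner (m, -1::real) x = - c}"
    by (auto simp: inner_Pair)
  have faceG: "G face_of newt f"
    unfolding G_def hyp
  proof (rule face_of_Int_supporting_hyperplane_le[OF convex_newt])
    fix x assume "x \<in> newt f"
    then have "m * fst x + c \<le> snd x" using above by blast
    then show "inner (m, - 1) x \<le> - c" by (cases x) (auto simp: inner_Pair)
  qed
  have eG: "e \<subseteq> G" unfolding G_def using face_of_imp_subset[OF face] online by auto
  have "aff_dim G \<le> aff_dim {x. inner (m, -1::real) x = - c}"
    by (rule aff_dim_subset) (use G_def hyp in auto)
  also have "\<dots> = 1" using aff_dim_hyperplane[of "(m, -1::real)" "-c"] by (simp add: zero_prod_def)
  finally have G1: "aff_dim G \<le> 1" .
  have "e = G"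
  proof (rule ccontr)
    assume "e \<noteq> G"
    moreover have "e face_of G" by (rule face_of_subset[OF face eG]) (simp add: G_def)
    ultimately have "aff_dim e < aff_dim G"
      using face_of_aff_dim_lt[of G e] face_of_imp_convex[OF faceG] by blast
    then show False using G1 ad by simp
  qed
  have cpt: "compact ((\<lambda>(i, j). (real i, real j)) ` supp2 f)"
    using supp2_finite by (intro finite_imp_compact) auto
  obtain S' where S': "S' \<subseteq> (\<lambda>(i, j). (real i, real j)) ` supp2 f" "e = convex hull S'"
    by (rule face_of_convex_hull_subset[OF cpt face[unfolded newt_def]])
  have S'e: "S' \<subseteq> e" using S'(2) hull_subset[of S' convex] by simp
  have "\<exists>p\<in>S'. \<exists>q\<in>S'. fst p < fst q"
  proof (rule ccontr)
    assume "\<not> ?thesis"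
    then have "\<forall>p\<in>S'. \<forall>q\<in>S'. fst p = fst q" by (meson linorder_neqE)
    moreover have "\<forall>p\<in>S'. snd p = m * fst p + c" using S'e online by blast
    ultimately have "\<forall>p\<in>S'. \<forall>q\<in>S'. p = q" by (metis prod.expand)
    then have "S' = {} \<or> (\<exists>a. S' = {a})" by blast
    then have "aff_dim e \<le> 0" using S'(2) by auto
    then show False using ad by simp
  qed
  then obtain p q where pq: "p \<in> S'" "q \<in> S'" "fst p < fst q" by blast
  obtain i1 j1 where 1: "(i1,j1) \<in> supp2 f" "p = (real i1, real j1)" using pq S' by auto
  obtain i2 j2 where 2: "(i2,j2) \<in> supp2 f" "q = (real i2, real j2)" using pq S' by auto
  have "p \<in> e" "q \<in> e" using pq S'e by auto
  then have "real j1 = m * real i1 + c" "real j2 = m * real i2 + c" "i1 < i2"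
    using online pq 1 2 by auto
  moreover have "\<forall>i j. (i,j) \<in> supp2 f \<longrightarrow> m * real i + c \<le> real j"
    using above supp_in_newt by fastforce
  ultimately have "LEP f e m c" unfolding LEP_def using \<open>e = G\<close> G_def 1 2 by blast
  then show ?thesis by blast
qed

lemma LEP_edge_supp:
  assumes "LEP f e m c"
  shows "edge_supp f e = {(i,j). (i,j) \<in> supp2 f \<and> real j = m * real i + c}"
  using assms supp_in_newt unfolding LEP_def edge_supp_def by auto

lemma LEP_same_slope:
  assumes "LEP f e m c" "LEP f e' m c'"
  shows "e = e'"
proof -
  obtain i1 j1 where 1: "(i1,j1) \<in> supp2 f" "real j1 = m * real i1 + c" using assms(1) unfolding LEP_def by blast
  obtain i2 j2 where 2: "(i2,j2) \<in> supp2 f" "real j2 = m * real i2 + c'" using assms(2) unfolding LEP_def by blast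
  have "m * real i1 + c' \<le> real j1" using assms(2) 1(1) unfolding LEP_def by blast
  moreover have "m * real i2 + c \<le> real j2" using assms(1) 2(1) unfolding LEP_def by blast
  ultimately have "c = c'" using 1 2 by linarith
  then show ?thesis using assms unfolding LEP_def by auto
qed

definition rgt :: "complex poly poly \<Rightarrow> (real \<times> real) set \<Rightarrow> nat" where
  "rgt f e = Max (fst ` edge_supp f e)"

lemma edge_supp_finite: "finite (edge_supp f e)"
  by (rule finite_subset[OF _ supp2_finite[of f]]) (auto simp: edge_supp_def)

lemma LEP_ends:
  assumes "LEP f e m c"
  shows "edge_left f e < rgt f e"
    "\<exists>j. (edge_left f e, j) \<in> edge_supp f e" "\<exists>j. (rgt f e, j) \<in> edge_supp f e"
    "\<And>i j. (i,j) \<in> edge_supp f e \<Longrightarrow> edge_left f e \<le> i \<and> i \<le> rgt f e"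
proof -
  obtain i1 j1 i2 j2 where pts: "(i1,j1) \<in> supp2 f" "(i2,j2) \<in> supp2 f" "real j1 = m * real i1 + c"
        "real j2 = m * real i2 + c" "i1 < i2" using assms unfolding LEP_def by blast
  have in1: "(i1,j1) \<in> edge_supp f e" and in2: "(i2,j2) \<in> edge_supp f e"
    using pts LEP_edge_supp[OF assms] by auto
  have fin: "finite (fst ` edge_supp f e)" using edge_supp_finite by auto
  have "edge_left f e \<le> i1" unfolding edge_left_def using in1 fin by (force intro: Min_le)
  moreover have "i2 \<le> rgt f e" unfolding rgt_def using in2 fin by (force intro: Max_ge)
  ultimately show "edge_left f e < rgt f e" using pts by simp
  have ne: "fst ` edge_supp f e \<noteq> {}" using in1 by auto
  have "edge_left f e \<in> fst ` edge_supp f e" unfolding edge_left_def by (rule Min_in[OF fin ne])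
  then show "\<exists>j. (edge_left f e, j) \<in> edge_supp f e" by force
  have "rgt f e \<in> fst ` edge_supp f e" unfolding rgt_def by (rule Max_in[OF fin ne])
  then show "\<exists>j. (rgt f e, j) \<in> edge_supp f e" by force
  fix i j assume "(i,j) \<in> edge_supp f e"
  then show "edge_left f e \<le> i \<and> i \<le> rgt f e" unfolding edge_left_def rgt_def using fin
    by (force intro: Min_le Max_ge)
qed

lemma interp_lt:
  fixes u v x y1 y2 m c :: real
  assumes "u < x" "x < v" "y1 \<le> m * u + c" "y2 \<le> m * v + c" "y1 < m * u + c \<or> y2 < m * v + c"
  shows "y1 + (y2 - y1)*(x-u)/(v-u) < m * x + c"
proof -
  have vu: "v - u > 0" using assms by simp
  have e1: "y1 + (y2 - y1)*(x-u)/(v-u) = (y1*(v-x) + y2*(x-u))/(v-u)" using vu by (simp add: field_simps)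
  have e2: "m * x + c = ((m * u + c)*(v-x) + (m * v + c)*(x-u))/(v-u)" using vu by (simp add: field_simps)
  have a: "y1*(v-x) \<le> (m * u + c)*(v-x)" using assms by (intro mult_right_mono) auto
  have b: "y2*(x-u) \<le> (m * v + c)*(x-u)" using assms by (intro mult_right_mono) auto
  have "y1*(v-x) < (m * u + c)*(v-x) \<or> y2*(x-u) < (m * v + c)*(x-u)"
    using assms by (auto intro: mult_strict_right_mono)
  then have "y1*(v-x) + y2*(x-u) < (m * u + c)*(v-x) + (m * v + c)*(x-u)" using a b by linarith
  then show ?thesis unfolding e1 e2 using vu by (simp add: divide_strict_right_mono)
qed

lemma affine_nonneg:
  fixes u v x a b :: real
  assumes "u < x" "x < v" "0 \<le> a * u + b" "0 \<le> a * v + b"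
  shows "0 \<le> a * x + b"
proof (cases "a \<ge> 0")
  case True
  then have "a * u \<le> a * x" using assms by (intro mult_left_mono) auto
  then show ?thesis using assms by linarith
next
  case False
  then have "a * v \<le> a * x" using assms by (intro mult_left_mono_neg) auto
  then show ?thesis using assms by linarith
qed

lemma exists_edge:
  assumes p0: "(i0,j0) \<in> supp2 f" and p1: "(i1,j1) \<in> supp2 f" and k: "i0 \<le> k" "k < i1"
  shows "\<exists>e\<in>lower_edges f. edge_left f e \<le> k \<and> k < rgt f e"
proof -
  define x where "x = real k + 1/2"
  define Q where "Q = {(p,q). p \<in> supp2 f \<and> q \<in> supp2 f \<and> fst p \<le> k \<and> k < fst q}"
  define val where "val = (\<lambda>(p::nat\<times>nat,q::nat\<times>nat). real (snd p) + (real (snd q) - real (snd p)) *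
        (x - real (fst p)) / (real (fst q) - real (fst p)))"
  have finQ: "finite Q" unfolding Q_def
    by (rule finite_subset[of _ "supp2 f \<times> supp2 f"]) (auto simp: supp2_finite)
  have neQ: "((i0,j0),(i1,j1)) \<in> Q" unfolding Q_def using assms by auto
  define \<mu> where "\<mu> = Min (val ` Q)"
  have "\<mu> \<in> val ` Q" unfolding \<mu>_def using finQ neQ by (intro Min_in) auto
  then obtain a1 b1 a2 b2 where inQ: "((a1,b1),(a2,b2)) \<in> Q" and vmu: "val ((a1,b1),(a2,b2)) = \<mu>" by auto
  have minv: "\<mu> \<le> val pq" if "pq \<in> Q" for pq unfolding \<mu>_def using finQ that by (intro Min_le) auto
  have s1: "(a1,b1) \<in> supp2 f" and s2: "(a2,b2) \<in> supp2 f" and a12: "a1 \<le> k" "k < a2"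
    using inQ unfolding Q_def by auto
  have xa: "real a1 < x" "x < real a2" using a12 unfolding x_def by linarith+
  define m where "m = (real b2 - real b1) / (real a2 - real a1)"
  define c where "c = real b1 - m * real a1"
  have da: "real a2 - real a1 > 0" using xa by simp
  have l1: "real b1 = m * real a1 + c" unfolding c_def by simp
  have mda: "m * (real a2 - real a1) = real b2 - real b1" unfolding m_def using da by simp
  have l2: "real b2 = m * real a2 + c" unfolding c_def using mda by (simp add: algebra_simps)
  have "(real b2 - real b1) * (x - real a1) / (real a2 - real a1) = m * (x - real a1)"
    unfolding m_def by simp
  then have vline: "\<mu> = m * x + c" unfolding vmu[symmetric] val_def c_def by (simp add: algebra_simps)
  have above: "m * real i + c \<le> real j" if ij: "(i,j) \<in> supp2 f" for i j
  proof (rule ccontr)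
    assume "\<not> ?thesis"
    then have lt: "real j < m * real i + c" by simp
    show False
    proof (cases "i \<le> k")
      case True
      have "((i,j),(a2,b2)) \<in> Q" unfolding Q_def using ij s2 True a12 by auto
      then have "\<mu> \<le> val ((i,j),(a2,b2))" by (rule minv)
      moreover have "val ((i,j),(a2,b2)) < m * x + c" unfolding val_def
        using interp_lt[of "real i" x "real a2" "real j" m c "real b2"] True xa lt l2 unfolding x_def by auto
      ultimately show False using vline by simp
    next
      case False
      have "((a1,b1),(i,j)) \<in> Q" unfolding Q_def using ij s1 False a12 by auto
      then have "\<mu> \<le> val ((a1,b1),(i,j))" by (rule minv)
      moreover have "val ((a1,b1),(i,j)) < m * x + c" unfolding val_def
        using interp_lt[of "real a1" x "real i" "real b1" m c "real j"] False xa lt l1 unfolding x_def by auto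
      ultimately show False using vline by simp
    qed
  qed
  define G where "G = newt f \<inter> {p. snd p = m * fst p + c}"
  have lep: "LEP f G m c" unfolding LEP_def G_def
  proof (intro conjI)
    show "\<forall>i j. (i,j) \<in> supp2 f \<longrightarrow> m * real i + c \<le> real j" using above by blast
    show "\<exists>i1 j1 i2 j2. (i1, j1) \<in> supp2 f \<and> (i2, j2) \<in> supp2 f \<and> real j1 = m * real i1 + c \<and>
        real j2 = m * real i2 + c \<and> i1 < i2"
      using s1 s2 l1 l2 a12 by (intro exI[of _ a1] exI[of _ b1] exI[of _ a2] exI[of _ b2]) auto
  qed (rule refl)
  have in1: "(a1,b1) \<in> edge_supp f G" and in2: "(a2,b2) \<in> edge_supp f G"
    using LEP_edge_supp[OF lep] s1 s2 l1 l2 by auto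
  have "edge_left f G \<le> a1" using LEP_ends(4)[OF lep in1] by simp
  moreover have "a2 \<le> rgt f G" using LEP_ends(4)[OF lep in2] by simp
  ultimately show ?thesis using LEP_lower[OF lep] a12 by force
qed

lemma unique_edge:
  assumes e1: "e1 \<in> lower_edges f" and e2: "e2 \<in> lower_edges f"
    and k1: "edge_left f e1 \<le> k" "k < rgt f e1" and k2: "edge_left f e2 \<le> k" "k < rgt f e2"
  shows "e1 = e2"
proof -
  obtain m1 c1 where L1: "LEP f e1 m1 c1" using lower_LEP[OF e1] by blast
  obtain m2 c2 where L2: "LEP f e2 m2 c2" using lower_LEP[OF e2] by blast
  define x where "x = real k + 1/2"
  have ab1: "\<And>i j. (i,j) \<in> supp2 f \<Longrightarrow> m1 * real i + c1 \<le> real j" using L1 unfolding LEP_def by blast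
  have ab2: "\<And>i j. (i,j) \<in> supp2 f \<Longrightarrow> m2 * real i + c2 \<le> real j" using L2 unfolding LEP_def by blast
  have es1: "\<And>i j. (i,j) \<in> edge_supp f e1 \<longleftrightarrow> (i,j) \<in> supp2 f \<and> real j = m1 * real i + c1"
    using LEP_edge_supp[OF L1] by auto
  have es2: "\<And>i j. (i,j) \<in> edge_supp f e2 \<longleftrightarrow> (i,j) \<in> supp2 f \<and> real j = m2 * real i + c2"
    using LEP_edge_supp[OF L2] by auto
  obtain u1 v1 where u1: "(edge_left f e1, u1) \<in> edge_supp f e1" and v1: "(rgt f e1, v1) \<in> edge_supp f e1"
    using LEP_ends[OF L1] by blast
  obtain u2 v2 where u2: "(edge_left f e2, u2) \<in> edge_supp f e2" and v2: "(rgt f e2, v2) \<in> edge_supp f e2"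
    using LEP_ends[OF L2] by blast
  have x1: "real (edge_left f e1) < x" "x < real (rgt f e1)" using k1 unfolding x_def by linarith+
  have x2: "real (edge_left f e2) < x" "x < real (rgt f e2)" using k2 unfolding x_def by linarith+
  have "0 \<le> (m1 - m2) * x + (c1 - c2)"
  proof (rule affine_nonneg[OF x1])
    show "0 \<le> (m1 - m2) * real (edge_left f e1) + (c1 - c2)"
      using es1[of _ u1] u1 ab2[of "edge_left f e1" u1] by (simp add: algebra_simps)
    show "0 \<le> (m1 - m2) * real (rgt f e1) + (c1 - c2)"
      using es1[of _ v1] v1 ab2[of "rgt f e1" v1] by (simp add: algebra_simps)
  qed
  moreover have "0 \<le> (m2 - m1) * x + (c2 - c1)"
  proof (rule affine_nonneg[OF x2])
    show "0 \<le> (m2 - m1) * real (edge_left f e2) + (c2 - c1)"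
      using es2[of _ u2] u2 ab1[of "edge_left f e2" u2] by (simp add: algebra_simps)
    show "0 \<le> (m2 - m1) * real (rgt f e2) + (c2 - c1)"
      using es2[of _ v2] v2 ab1[of "rgt f e2" v2] by (simp add: algebra_simps)
  qed
  ultimately have eqx: "(m2 - m1) * x + (c2 - c1) = 0" by (simp add: algebra_simps)
  have g1: "0 \<le> (m2 - m1) * real (edge_left f e2) + (c2 - c1)"
    using es2[of _ u2] u2 ab1[of "edge_left f e2" u2] by (simp add: algebra_simps)
  have g2: "0 \<le> (m2 - m1) * real (rgt f e2) + (c2 - c1)"
    using es2[of _ v2] v2 ab1[of "rgt f e2" v2] by (simp add: algebra_simps)
  have "m1 = m2"
  proof (rule ccontr)
    assume ne: "m1 \<noteq> m2"
    show False
    proof (cases "m2 - m1 > 0")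
      case True
      have "(m2 - m1) * real (edge_left f e2) < (m2 - m1) * x" using True x2 by simp
      then show False using eqx g1 by linarith
    next
      case False
      then have "m2 - m1 < 0" using ne by simp
      then have "(m2 - m1) * real (rgt f e2) < (m2 - m1) * x" using x2 by simp
      then show False using eqx g2 by linarith
    qed
  qed
  then show ?thesis using LEP_same_slope L1 L2 by blast
qed

lemma lower_edges_finite: "finite (lower_edges f)"
proof -
  have "polytope (newt f)" unfolding polytope_def newt_def using supp2_finite by blast
  then have "finite {F. F face_of newt f}" by (rule finite_polytope_faces)
  then show ?thesis by (rule finite_subset[rotated]) (auto simp: lower_edges_def)
qed

lemma sum_widths:
  assumes ne: "supp2 f \<noteq> {}"
  shows "(\<Sum>e\<in>lower_edges f. rgt f e - edge_left f e) = Max (fst ` supp2 f) - Min (fst ` supp2 f)"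
proof -
  define imin where "imin = Min (fst ` supp2 f)"
  define imax where "imax = Max (fst ` supp2 f)"
  have fin: "finite (fst ` supp2 f)" using supp2_finite by auto
  have ne': "fst ` supp2 f \<noteq> {}" using ne by auto
  obtain j0 where p0: "(imin, j0) \<in> supp2 f" using Min_in[OF fin ne'] unfolding imin_def by force
  obtain j1 where p1: "(imax, j1) \<in> supp2 f" using Max_in[OF fin ne'] unfolding imax_def by force
  have "(\<Sum>e\<in>lower_edges f. rgt f e - edge_left f e) = (\<Sum>e\<in>lower_edges f. card {edge_left f e..<rgt f e})"
    by simp
  also have "\<dots> = card (\<Union>e\<in>lower_edges f. {edge_left f e..<rgt f e})"
  proof (rule card_UN_disjoint[symmetric])
    show "finite (lower_edges f)" by (rule lower_edges_finite)
    show "\<forall>e\<in>lower_edges f. finite {edge_left f e..<rgt f e}" by simp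
    show "\<forall>e\<in>lower_edges f. \<forall>e'\<in>lower_edges f. e \<noteq> e' \<longrightarrow>
      {edge_left f e..<rgt f e} \<inter> {edge_left f e'..<rgt f e'} = {}"
    proof (intro ballI impI)
      fix e e' assume ee: "e \<in> lower_edges f" "e' \<in> lower_edges f" "e \<noteq> e'"
      show "{edge_left f e..<rgt f e} \<inter> {edge_left f e'..<rgt f e'} = {}"
      proof (rule ccontr)
        assume "{edge_left f e..<rgt f e} \<inter> {edge_left f e'..<rgt f e'} \<noteq> {}"
        then obtain k where "k \<in> {edge_left f e..<rgt f e} \<inter> {edge_left f e'..<rgt f e'}" by blast
        then have "edge_left f e \<le> k" "k < rgt f e" "edge_left f e' \<le> k" "k < rgt f e'" by auto
        then show False using unique_edge[OF ee(1) ee(2)] ee(3) by blast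
      qed
    qed
  qed
  also have "(\<Union>e\<in>lower_edges f. {edge_left f e..<rgt f e}) = {imin..<imax}"
  proof (rule antisym)
    show "(\<Union>e\<in>lower_edges f. {edge_left f e..<rgt f e}) \<subseteq> {imin..<imax}"
    proof (intro UN_least subsetI)
      fix e k assume e: "e \<in> lower_edges f" and k: "k \<in> {edge_left f e..<rgt f e}"
      obtain m c where L: "LEP f e m c" using lower_LEP[OF e] by blast
      obtain u v where u: "(edge_left f e, u) \<in> edge_supp f e" and v: "(rgt f e, v) \<in> edge_supp f e"
        using LEP_ends[OF L] by blast
      have "(edge_left f e, u) \<in> supp2 f" "(rgt f e, v) \<in> supp2 f" using u v by (auto simp: edge_supp_def)
      then have "imin \<le> edge_left f e" "rgt f e \<le> imax" unfolding imin_def imax_def using fin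
        by (force intro: Min_le Max_ge)+
      then show "k \<in> {imin..<imax}" using k by auto
    qed
    show "{imin..<imax} \<subseteq> (\<Union>e\<in>lower_edges f. {edge_left f e..<rgt f e})"
    proof
      fix k assume "k \<in> {imin..<imax}"
      then obtain e where "e \<in> lower_edges f" "edge_left f e \<le> k" "k < rgt f e"
        using exists_edge[OF p0 p1] by auto
      then show "k \<in> (\<Union>e\<in>lower_edges f. {edge_left f e..<rgt f e})" by auto
    qed
  qed
  finally show ?thesis unfolding imin_def imax_def by simp
qed

lemma eval_y_coeff: "coeff (eval_y p c) n = poly (coeff p n) c"
  unfolding eval_y_def by (simp add: coeff_map_poly)

lemma eval_y_pCons: "eval_y (pCons a p) c = pCons (poly a c) (eval_y p c)"
  unfolding eval_y_def by (simp add: map_poly_pCons)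

lemma poly_eval_y: "poly (eval_y p c) x = poly (poly p [:x:]) c"
proof (induction p)
  case 0 then show ?case by (simp add: eval_y_def)
next
  case (pCons a p) then show ?case by (simp add: eval_y_pCons)
qed

lemma eval_y_mult: "eval_y (p * q) c = eval_y p c * eval_y q c"
  by (rule poly_eq_poly_eq_iff[THEN iffD1]) (auto simp: poly_eval_y)

lemma eval_y_1: "eval_y 1 c = 1"
  unfolding eval_y_def by simp

lemma eval_y_prod: "eval_y (\<Prod>e\<in>A. p e) c = (\<Prod>e\<in>A. eval_y (p e) c)"
  by (induction A rule: infinite_finite_induct) (auto simp: eval_y_1 eval_y_mult)

lemma poly_eval_y_supp:
  "poly (eval_y f c) x = (\<Sum>(i,j)\<in>supp2 f. coeff (coeff f i) j * c ^ j * x ^ i)"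
proof -
  define T where "T = Sigma {..degree f} (\<lambda>i. {..degree (coeff f i)})"
  have "poly (eval_y f c) x = poly (poly f [:x:]) c" by (rule poly_eval_y)
  also have "poly f [:x:] = (\<Sum>i\<le>degree f. coeff f i * [:x:] ^ i)" by (rule poly_altdef)
  also have "poly \<dots> c = (\<Sum>i\<le>degree f. poly (coeff f i) c * x ^ i)"
    by (simp add: poly_sum poly_power)
  also have "\<dots> = (\<Sum>i\<le>degree f. \<Sum>j\<le>degree (coeff f i). coeff (coeff f i) j * c ^ j * x ^ i)"
    by (simp add: poly_altdef sum_distrib_right)
  also have "\<dots> = (\<Sum>(i,j)\<in>T. coeff (coeff f i) j * c ^ j * x ^ i)"
    unfolding T_def by (rule sum.Sigma) auto
  also have "\<dots> = (\<Sum>(i,j)\<in>supp2 f. coeff (coeff f i) j * c ^ j * x ^ i)"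
  proof (rule sum.mono_neutral_right)
    show "finite T" unfolding T_def by auto
    show "supp2 f \<subseteq> T"
    proof
      fix ij assume "ij \<in> supp2 f"
      then obtain i j where ij: "ij = (i,j)" and nz: "coeff (coeff f i) j \<noteq> 0" by (auto simp: supp2_def)
      then have "coeff f i \<noteq> 0" by auto
      then show "ij \<in> T" unfolding T_def ij using nz by (auto simp: le_degree)
    qed
    show "\<forall>i\<in>T - supp2 f. (case i of (i, j) \<Rightarrow> coeff (coeff f i) j * c ^ j * x ^ i) = 0"
      by (auto simp: supp2_def)
  qed
  finally show ?thesis .
qed

lemma poly_eval_y_edge:
  "poly (eval_y (edge_star f e) c) z =
     (\<Sum>(i,j)\<in>edge_supp f e. coeff (coeff f i) j * c ^ j * z ^ (i - edge_left f e))"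
proof -
  have "poly (eval_y (edge_star f e) c) z = poly (poly (edge_star f e) [:z:]) c" by (rule poly_eval_y)
  also have "\<dots> = (\<Sum>(i,j)\<in>edge_supp f e. coeff (coeff f i) j * c ^ j * z ^ (i - edge_left f e))"
    unfolding edge_star_def poly_sum
    by (simp add: poly_sum poly_monom poly_power case_prod_unfold mult_ac)
  finally show ?thesis .
qed

lemma coeff_eval_y_edge:
  "coeff (eval_y (edge_star f e) c) t =
     (\<Sum>(i,j)\<in>edge_supp f e. if i - edge_left f e = t then coeff (coeff f i) j * c ^ j else 0)"
  unfolding eval_y_coeff edge_star_def coeff_sum poly_sum
  by (intro sum.cong refl) (auto simp: poly_monom coeff_monom)

lemma edge_poly_props:
  assumes L: "LEP f e m c" and w: "w \<noteq> 0"
  defines "h \<equiv> eval_y (edge_star f e) w"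
  shows "h \<noteq> 0" "degree h = rgt f e - edge_left f e" "poly h 0 \<noteq> 0"
    "\<And>z. z ^ edge_left f e * poly h z = (\<Sum>(i,j)\<in>edge_supp f e. coeff (coeff f i) j * w ^ j * z ^ i)"
proof -
  define a where "a = edge_left f e"
  define b where "b = rgt f e"
  define E where "E = edge_supp f e"
  have Eiff: "\<And>i j. (i,j) \<in> E \<longleftrightarrow> (i,j) \<in> supp2 f \<and> real j = m * real i + c"
    unfolding E_def using LEP_edge_supp[OF L] by auto
  have rng: "\<And>i j. (i,j) \<in> E \<Longrightarrow> a \<le> i \<and> i \<le> b" unfolding a_def b_def E_def using LEP_ends(4)[OF L] by blast
  have finE: "finite E" unfolding E_def by (rule edge_supp_finite)
  have cf: "coeff h t = (\<Sum>(i,j)\<in>E. if i - a = t then coeff (coeff f i) j * w ^ j else 0)" for t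
    unfolding h_def a_def E_def by (rule coeff_eval_y_edge)
  have one: "coeff h t = coeff (coeff f (a+t)) j * w ^ j" if tj: "(a+t, j) \<in> E" for t j
  proof -
    have "coeff h t = (\<Sum>x\<in>E. if x = (a+t, j) then coeff (coeff f (fst x)) (snd x) * w ^ (snd x) else 0)"
      unfolding cf
    proof (intro sum.cong refl)
      fix x assume x: "x \<in> E"
      obtain i j' where x': "x = (i,j')" by (cases x)
      have "(i - a = t) \<longleftrightarrow> x = (a+t, j)"
      proof
        assume it: "i - a = t"
        then have "i = a + t" using rng[of i j'] x x' by auto
        moreover have "real j' = m * real i + c" "real j = m * real (a+t) + c" using Eiff x x' tj by auto
        ultimately show "x = (a+t, j)" using x' by simp
      qed (use x' in auto)
      then show "(case x of (i, j) \<Rightarrow> if i - a = t then coeff (coeff f i) j * w ^ j else 0) =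
          (if x = (a + t, j) then coeff (coeff f (fst x)) (snd x) * w ^ snd x else 0)"
        using x' by auto
    qed
    also have "\<dots> = coeff (coeff f (a+t)) j * w ^ j" using tj finE by (simp add: sum.delta)
    finally show ?thesis .
  qed
  have nz: "coeff h t \<noteq> 0" if "(a+t, j) \<in> E" for t j
  proof -
    have "coeff (coeff f (a+t)) j \<noteq> 0" using that Eiff by (auto simp: supp2_def)
    then show ?thesis using one[OF that] w by simp
  qed
  have zero: "coeff h t = 0" if "t > b - a" for t
    unfolding cf by (rule sum.neutral) (use that rng in force)
  obtain u where u: "(a, u) \<in> E" using LEP_ends(2)[OF L] unfolding a_def E_def by blast
  obtain v where v: "(b, v) \<in> E" using LEP_ends(3)[OF L] unfolding b_def E_def by blast
  have ab: "a < b" unfolding a_def b_def using LEP_ends(1)[OF L] .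
  have c0: "coeff h 0 \<noteq> 0" using nz[of 0 u] u by simp
  then show "h \<noteq> 0" by auto
  show "poly h 0 \<noteq> 0" using c0 by (simp add: poly_0_coeff_0)
  have "coeff h (b - a) \<noteq> 0" using nz[of "b - a" v] v ab by simp
  then have "b - a \<le> degree h" by (rule le_degree)
  moreover have "degree h \<le> b - a" using zero by (intro degree_le) auto
  ultimately show "degree h = rgt f e - edge_left f e" unfolding a_def b_def by simp
  fix z
  have "z ^ a * poly h z = (\<Sum>(i,j)\<in>E. coeff (coeff f i) j * w ^ j * (z ^ a * z ^ (i - a)))"
    unfolding h_def poly_eval_y_edge a_def[symmetric] E_def[symmetric] sum_distrib_left
    by (intro sum.cong refl) (auto simp: mult_ac)
  also have "\<dots> = (\<Sum>(i,j)\<in>E. coeff (coeff f i) j * w ^ j * z ^ i)"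
  proof (intro sum.cong refl)
    fix x assume x: "x \<in> E"
    obtain i j where x': "x = (i,j)" by (cases x)
    have "a \<le> i" using rng x x' by auto
    then have "z ^ a * z ^ (i - a) = z ^ i" by (simp add: power_add[symmetric])
    then show "(case x of (i, j) \<Rightarrow> coeff (coeff f i) j * w ^ j * (z ^ a * z ^ (i - a))) =
               (case x of (i, j) \<Rightarrow> coeff (coeff f i) j * w ^ j * z ^ i)" using x' by simp
  qed
  finally show "z ^ edge_left f e * poly h z = (\<Sum>(i,j)\<in>edge_supp f e. coeff (coeff f i) j * w ^ j * z ^ i)"
    unfolding a_def E_def .
qed

lemma size_count: "size M = (\<Sum>x\<in>set_mset M. count M x)"
  by (simp add: size_multiset_overloaded_eq)

lemma size_filter_proots:
  assumes "p \<noteq> 0"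
  shows "size (filter_mset P (proots p)) = (\<Sum>x\<in>{x. poly p x = 0 \<and> P x}. order x p)"
proof -
  have "size (filter_mset P (proots p)) = (\<Sum>x\<in>set_mset (filter_mset P (proots p)). count (filter_mset P (proots p)) x)"
    by (rule size_count)
  also have "set_mset (filter_mset P (proots p)) = {x. poly p x = 0 \<and> P x}" using assms by auto
  also have "(\<Sum>x\<in>{x. poly p x = 0 \<and> P x}. count (filter_mset P (proots p)) x) = (\<Sum>x\<in>{x. poly p x = 0 \<and> P x}. order x p)"
    using assms by (intro sum.cong refl) auto
  finally show ?thesis .
qed

lemma zorder_poly:
  assumes "p \<noteq> 0"
  shows "zorder (poly p) z = int (order z p)"
proof -
  obtain q where q: "p = [:- z, 1:] ^ order z p * q" "\<not> [:- z, 1:] dvd q"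
    using order_decomp[OF assms] by blast
  have qz: "poly q z \<noteq> 0" using q(2) by (simp add: poly_eq_0_iff_dvd)
  show ?thesis
  proof (rule zorder_eqI[of UNIV z "poly q"])
    show "poly q holomorphic_on UNIV" by (intro holomorphic_intros)
    fix w assume "w \<in> UNIV" "w \<noteq> z"
    have "poly p w = (w - z) ^ order z p * poly q w" by (subst q(1)) (simp add: poly_power)
    then show "poly p w = poly q w * (w - z) powi int (order z p)" by simp
  qed (use qz in auto)
qed

lemma rouche_count:
  fixes H Q :: "complex poly" and \<rho> \<delta> :: real and lam z0 :: complex
  assumes H: "H \<noteq> 0" and Q: "Q \<noteq> 0" and \<delta>: "\<delta> > 0" and \<rho>: "\<rho> > 0" and lam: "lam \<noteq> 0"
    and dom: "\<And>z. cmod (z - z0) = \<delta> \<Longrightarrow> cmod (poly Q (of_real \<rho> * z) - lam * poly H z) < cmod (lam * poly H z)"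
    and iso: "\<And>z. cmod (z - z0) \<le> \<delta> \<Longrightarrow> z \<noteq> z0 \<Longrightarrow> poly H z \<noteq> 0"
  shows "size (filter_mset (\<lambda>x. cmod (x - of_real \<rho> * z0) < \<rho> * \<delta>) (proots Q)) = order z0 H"
proof -
  define r where "r = (of_real \<rho> :: complex)"
  have r0: "r \<noteq> 0" using \<rho> unfolding r_def by simp
  define fa where "fa = (\<lambda>z. lam * poly H z)"
  define ga where "ga = (\<lambda>z. poly Q (r * z) - lam * poly H z)"
  define \<gamma> where "\<gamma> = circlepath z0 \<delta>"
  have fg: "(\<lambda>p. fa p + ga p) = (\<lambda>z. poly Q (r * z))" unfolding fa_def ga_def by auto
  have fgp: "\<And>p. fa p + ga p = poly Q (r * p)" unfolding fa_def ga_def by auto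
  have finQ: "finite {p. poly Q (r * p) = 0}"
  proof -
    have "{p. poly Q (r * p) = 0} \<subseteq> (\<lambda>x. x / r) ` {x. poly Q x = 0}" using r0 by force
    then show ?thesis by (rule finite_subset) (use poly_roots_finite[OF Q] in auto)
  qed
  have finH: "finite {p. fa p = 0}" unfolding fa_def using poly_roots_finite[OF H] lam by simp
  have pimg: "path_image \<gamma> = sphere z0 \<delta>" unfolding \<gamma>_def using \<delta> by simp
  have R: "(\<Sum>p\<in>{p \<in> UNIV. fa p + ga p = 0}. winding_number \<gamma> p * zorder (\<lambda>p. fa p + ga p) p)
          = (\<Sum>p\<in>{p \<in> UNIV. fa p = 0}. winding_number \<gamma> p * zorder fa p)"
  proof (rule Rouche_theorem)
    show "finite {p \<in> UNIV. fa p + ga p = 0}" using finQ by (simp add: fgp)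
    show "finite {p \<in> UNIV. fa p = 0}" using finH by simp
    show "fa holomorphic_on UNIV" unfolding fa_def by (intro holomorphic_intros)
    show "ga holomorphic_on UNIV" unfolding ga_def by (intro holomorphic_intros)
    show "valid_path \<gamma>" unfolding \<gamma>_def by simp
    show "pathfinish \<gamma> = pathstart \<gamma>" unfolding \<gamma>_def by simp
    show "\<forall>z\<in>path_image \<gamma>. cmod (ga z) < cmod (fa z)"
      unfolding pimg fa_def ga_def r_def using dom by (auto simp: dist_norm norm_minus_commute)
  qed auto
  have wn_in: "winding_number \<gamma> p = 1" if "cmod (p - z0) < \<delta>" for p
    unfolding \<gamma>_def by (rule winding_number_circlepath) (use that in auto)
  have wn_out: "winding_number \<gamma> p = 0" if "cmod (p - z0) > \<delta>" for p
  proof -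
    have "path \<gamma>" unfolding \<gamma>_def by simp
    then show ?thesis
      by (rule winding_number_zero_outside[of _ "cball z0 \<delta>"])
         (use that pimg in \<open>auto simp: \<gamma>_def dist_norm norm_minus_commute\<close>)
  qed
  have "(\<Sum>p\<in>{p \<in> UNIV. fa p = 0}. winding_number \<gamma> p * zorder fa p)
      = (\<Sum>p\<in>{p. poly H p = 0}. if p = z0 then of_int (zorder fa z0) else 0)"
  proof (intro sum.cong)
    show "{p \<in> UNIV. fa p = 0} = {p. poly H p = 0}" unfolding fa_def using lam by auto
    fix p assume p: "p \<in> {p. poly H p = 0}"
    show "winding_number \<gamma> p * of_int (zorder fa p) = (if p = z0 then of_int (zorder fa z0) else 0)"
    proof (cases "p = z0")
      case True then show ?thesis using wn_in[of p] \<delta> by simp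
    next
      case False
      then have "cmod (p - z0) > \<delta>" using iso[of p] p by force
      then show ?thesis using wn_out False by simp
    qed
  qed
  also have "\<dots> = (if poly H z0 = 0 then of_int (zorder fa z0) else 0)"
    by (simp add: sum.delta[OF poly_roots_finite[OF H]])
  also have "\<dots> = of_nat (order z0 H)"
  proof -
    have "fa = poly (smult lam H)" unfolding fa_def by auto
    then have "zorder fa z0 = int (order z0 (smult lam H))" using zorder_poly[of "smult lam H" z0] H lam by simp
    also have "\<dots> = int (order z0 H)" using lam by (simp add: order_smult)
    finally show ?thesis using order_0I[of H z0] by auto
  qed
  finally have RHS: "(\<Sum>p\<in>{p \<in> UNIV. fa p = 0}. winding_number \<gamma> p * zorder fa p) = of_nat (order z0 H)" .
  define D where "D = {p. poly Q (r * p) = 0 \<and> cmod (p - z0) < \<delta>}"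
  have "(\<Sum>p\<in>{p \<in> UNIV. fa p + ga p = 0}. winding_number \<gamma> p * zorder (\<lambda>p. fa p + ga p) p)
      = (\<Sum>p\<in>{p. poly Q (r * p) = 0}. if cmod (p - z0) < \<delta> then of_int (zorder (\<lambda>z. poly Q (r * z)) p) else 0)"
  proof (intro sum.cong)
    show "{p \<in> UNIV. fa p + ga p = 0} = {p. poly Q (r * p) = 0}" by (simp add: fgp)
    fix p assume p: "p \<in> {p. poly Q (r * p) = 0}"
    have "cmod (p - z0) \<noteq> \<delta>"
    proof
      assume "cmod (p - z0) = \<delta>"
      from dom[OF this] p show False unfolding r_def by simp
    qed
    then consider "cmod (p - z0) < \<delta>" | "cmod (p - z0) > \<delta>" by linarith
    then show "winding_number \<gamma> p * of_int (zorder (\<lambda>p. fa p + ga p) p) =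
      (if cmod (p - z0) < \<delta> then of_int (zorder (\<lambda>z. poly Q (r * z)) p) else 0)"
      by cases (auto simp: wn_in wn_out fg)
  qed
  also have "\<dots> = (\<Sum>p\<in>D. of_int (zorder (\<lambda>z. poly Q (r * z)) p))"
    unfolding D_def using finQ by (subst sum.inter_filter[symmetric]) (auto intro: sum.cong)
  also have "\<dots> = (\<Sum>p\<in>D. of_nat (order (r * p) Q))"
  proof (intro sum.cong refl)
    fix p assume "p \<in> D"
    have mer: "poly Q meromorphic_on {r * p}"
    proof (rule analytic_on_imp_meromorphic_on)
      have "poly Q analytic_on UNIV" by (simp add: analytic_on_open holomorphic_intros)
      then show "poly Q analytic_on {r * p}" by (rule analytic_on_subset) auto
    qed
    have "zorder (\<lambda>z. poly Q (r * z)) p = zorder (poly Q) (r * p)" by (rule zorder_scale[OF mer r0])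
    also have "\<dots> = int (order (r * p) Q)" by (rule zorder_poly[OF Q])
    finally show "of_int (zorder (\<lambda>z. poly Q (r * z)) p) = (of_nat (order (r * p) Q) :: complex)" by simp
  qed
  also have "\<dots> = (\<Sum>x\<in>(\<lambda>p. r * p) ` D. of_nat (order x Q))"
    by (rule sum.reindex[symmetric, unfolded comp_def]) (use r0 in \<open>auto simp: inj_on_def\<close>)
  also have "(\<lambda>p. r * p) ` D = {x. poly Q x = 0 \<and> cmod (x - r * z0) < \<rho> * \<delta>}"
  proof -
    have key: "cmod (r * p - r * z0) < \<rho> * \<delta> \<longleftrightarrow> cmod (p - z0) < \<delta>" for p
    proof -
      have "cmod (r * p - r * z0) = \<rho> * cmod (p - z0)" unfolding r_def using \<rho>
        by (simp add: right_diff_distrib[symmetric] norm_mult)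
      then show ?thesis using \<rho> by simp
    qed
    show ?thesis unfolding D_def
    proof (safe)
      fix p assume "poly Q (r * p) = 0" "cmod (p - z0) < \<delta>"
      then show "cmod (r * p - r * z0) < \<rho> * \<delta>" using key by blast
    next
      fix x assume x: "poly Q x = 0" "cmod (x - r * z0) < \<rho> * \<delta>"
      have "x = r * (x / r)" using r0 by simp
      moreover have "cmod (x / r - z0) < \<delta>" using key[of "x / r"] x r0 by simp
      ultimately show "x \<in> (*) r ` {p. poly Q (r * p) = 0 \<and> cmod (p - z0) < \<delta>}" using x
        by (metis (mono_tags, lifting) image_eqI mem_Collect_eq)
    qed
  qed
  finally have LHS: "(\<Sum>p\<in>{p \<in> UNIV. fa p + ga p = 0}. winding_number \<gamma> p * zorder (\<lambda>p. fa p + ga p) p)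
     = of_nat (\<Sum>x\<in>{x. poly Q x = 0 \<and> cmod (x - r * z0) < \<rho> * \<delta>}. order x Q)" by simp
  have "of_nat (\<Sum>x\<in>{x. poly Q x = 0 \<and> cmod (x - r * z0) < \<rho> * \<delta>}. order x Q) = (of_nat (order z0 H) :: complex)"
    using R LHS RHS by simp
  then have "(\<Sum>x\<in>{x. poly Q x = 0 \<and> cmod (x - r * z0) < \<rho> * \<delta>}. order x Q) = order z0 H"
    by (simp only: of_nat_eq_iff)
  then show ?thesis using size_filter_proots[OF Q] unfolding r_def by simp
qed

lemma powr_mix:
  fixes r m :: real assumes "r > 0"
  shows "r ^ j * (r powr (-m)) ^ i = r powr (real j - m * real i)"
proof -
  have "r ^ j = r powr real j" using assms by (simp add: powr_realpow)
  moreover have "(r powr (-m)) ^ i = r powr (real i * (-m))" using assms by (simp add: powr_power)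
  ultimately show ?thesis by (simp add: powr_add[symmetric] algebra_simps)
qed

lemma B_Bm:
  assumes "g \<noteq> 0"
  shows "B g = Bm (filter_mset (\<lambda>z. z \<noteq> 0) (proots g))"
proof -
  have N: "N_ang a b g = Nm a b (filter_mset (\<lambda>z. z \<noteq> 0) (proots g))" for a b
  proof -
    have "Nm a b (filter_mset (\<lambda>z. z \<noteq> 0) (proots g)) =
      size (filter_mset (\<lambda>z. z \<noteq> 0 \<and> (a \<le> Arg2pi z \<and> Arg2pi z \<le> b)) (proots g))"
      unfolding Nm_def by (simp add: filter_filter_mset conj_commute)
    also have "\<dots> = (\<Sum>x\<in>{x. poly g x = 0 \<and> (x \<noteq> 0 \<and> (a \<le> Arg2pi x \<and> Arg2pi x \<le> b))}. order x g)"
      by (rule size_filter_proots[OF assms])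
    also have "\<dots> = N_ang a b g" unfolding N_ang_def nz_roots_def by (intro sum.cong) auto
    finally show ?thesis by simp
  qed
  have n: "n_nz g = size (filter_mset (\<lambda>z. z \<noteq> 0) (proots g))"
    unfolding n_nz_def nz_roots_def using size_filter_proots[OF assms, of "\<lambda>z. z \<noteq> 0"] by simp
  show ?thesis unfolding B_def Bm_def valset_def N n ..
qed

lemma close_sym: "close e x y \<Longrightarrow> close e y x"
  unfolding close_def
proof -
  assume "\<exists>k::int. \<bar>x - y - 2 * pi * of_int k\<bar> < e"
  then obtain k :: int where "\<bar>x - y - 2 * pi * of_int k\<bar> < e" by blast
  then have "\<bar>y - x - 2 * pi * of_int (-k)\<bar> < e" by (simp add: abs_minus_commute algebra_simps)
  then show "\<exists>k::int. \<bar>y - x - 2 * pi * of_int k\<bar> < e" by blast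
qed

lemma Bm_close:
  assumes "image_mset fst M = A" "image_mset snd M = H"
    "\<And>p. p \<in># M \<Longrightarrow> close e (Arg2pi (fst p)) (Arg2pi (snd p))" "e > 0"
  shows "\<bar>Bm A - Bm H\<bar> \<le> real (size A) * e / pi"
proof -
  have 1: "Bm A \<le> Bm H + real (size A) * e / pi" by (rule Bm_le[OF assms])
  have "Bm H \<le> Bm A + real (size H) * e / pi"
  proof (rule Bm_le[of "image_mset prod.swap M"])
    show "image_mset fst (image_mset prod.swap M) = H" using assms(2) by (simp add: multiset.map_comp comp_def)
    show "image_mset snd (image_mset prod.swap M) = A" using assms(1) by (simp add: multiset.map_comp comp_def)
    fix p assume "p \<in># image_mset prod.swap M"
    then obtain q where "q \<in># M" "p = prod.swap q" by auto
    then show "close e (Arg2pi (fst p)) (Arg2pi (snd p))" using assms(3) close_sym by auto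
  qed (use assms in auto)
  moreover have "size H = size A" using assms(1,2) by (metis size_image_mset)
  ultimately have "Bm H \<le> Bm A + real (size A) * e / pi" by simp
  then show ?thesis using 1 by linarith
qed

lemma angle_close:
  assumes z: "z \<noteq> 0" and e: "e > 0"
  shows "\<exists>d>0. \<forall>u. cmod (u - z) < d \<longrightarrow> close e (Arg2pi u) (Arg2pi z)"
proof -
  have "continuous (at 1) Arg" by (rule continuous_at_Arg) (auto simp: complex_nonpos_Reals_iff)
  then obtain d0 where d0: "d0 > 0" "\<And>v. dist v 1 < d0 \<Longrightarrow> dist (Arg v) (Arg 1) < e"
    unfolding continuous_at_eps_delta using e by blast
  define d where "d = min d0 1 * cmod z"
  have d: "d > 0" unfolding d_def using d0 z by simp
  show ?thesis
  proof (intro exI conjI allI impI)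
    show "d > 0" by (rule d)
    fix u assume u: "cmod (u - z) < d"
    define v where "v = u / z"
    have uv: "u = z * v" unfolding v_def using z by simp
    have "cmod (v - 1) = cmod (u - z) / cmod z" unfolding v_def using z
      by (simp add: norm_divide[symmetric] diff_divide_distrib)
    also have "\<dots> < min d0 1" using u z unfolding d_def by (subst pos_divide_less_eq) auto
    finally have v1: "cmod (v - 1) < min d0 1" .
    then have argv: "\<bar>Arg v\<bar> < e" using d0(2)[of v] by (simp add: dist_norm)
    have v0: "v \<noteq> 0" using v1 by auto
    have u0: "u \<noteq> 0" using uv v0 z by simp
    have eu: "u = of_real (cmod u) * exp (\<i> * of_real (Arg2pi u))" using Arg2pi[of u] unfolding is_Arg_def by blast
    have ez: "z = of_real (cmod z) * exp (\<i> * of_real (Arg2pi z))" using Arg2pi[of z] unfolding is_Arg_def by blast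
    have ev: "v = of_real (cmod v) * exp (\<i> * of_real (Arg v))" using Arg_eq[OF v0] by simp
    have "of_real (cmod u) * exp (\<i> * of_real (Arg2pi u)) =
          of_real (cmod u) * exp (\<i> * of_real (Arg2pi z + Arg v))"
    proof -
      have "of_real (cmod u) * exp (\<i> * of_real (Arg2pi u)) = u" using eu by simp
      also have "\<dots> = (of_real (cmod z) * exp (\<i> * of_real (Arg2pi z))) * (of_real (cmod v) * exp (\<i> * of_real (Arg v)))"
        using uv ez ev by metis
      also have "\<dots> = of_real (cmod z * cmod v) * (exp (\<i> * of_real (Arg2pi z)) * exp (\<i> * of_real (Arg v)))"
        by (simp add: mult_ac)
      also have "cmod z * cmod v = cmod u" using uv by (simp add: norm_mult)
      also have "exp (\<i> * of_real (Arg2pi z)) * exp (\<i> * of_real (Arg v)) = exp (\<i> * of_real (Arg2pi z + Arg v))"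
        by (simp add: exp_add[symmetric] algebra_simps)
      finally show ?thesis .
    qed
    then have "exp (\<i> * of_real (Arg2pi u)) = exp (\<i> * of_real (Arg2pi z + Arg v))" using u0 by simp
    then obtain n :: int where n: "\<i> * of_real (Arg2pi u) = \<i> * of_real (Arg2pi z + Arg v) + (of_int (2 * n) * pi) * \<i>"
      unfolding exp_eq by blast
    have "Arg2pi u = Arg2pi z + Arg v + 2 * pi * of_int n"
    proof -
      have eq1: "\<i> * complex_of_real (Arg2pi u) = \<i> * complex_of_real (Arg2pi z + Arg v + 2 * pi * of_int n)"
        using n by (simp add: algebra_simps)
      have "complex_of_real (Arg2pi u) = complex_of_real (Arg2pi z + Arg v + 2 * pi * of_int n)"
        using eq1 mult_left_cancel[of "\<i>"] by (metis complex_i_not_zero)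
      then show ?thesis by (simp only: of_real_eq_iff)
    qed
    then have "\<bar>Arg2pi u - Arg2pi z - 2 * pi * of_int n\<bar> < e" using argv by simp
    then show "close e (Arg2pi u) (Arg2pi z)" unfolding close_def by blast
  qed
qed

lemma finite_downclosed_aux:
  assumes "finite I" "\<And>i. i \<in> I \<Longrightarrow> \<exists>d>0. \<forall>d'. 0 < d' \<longrightarrow> d' \<le> d \<longrightarrow> P i d'"
  shows "\<exists>d>(0::real). \<forall>d'. 0 < d' \<longrightarrow> d' \<le> d \<longrightarrow> (\<forall>i\<in>I. P i d')"
  using assms
proof (induction I rule: finite_induct)
  case empty then show ?case by (intro exI[of _ 1]) auto
next
  case (insert x F)
  obtain d1 where d1: "d1 > 0" "\<forall>d'. 0 < d' \<longrightarrow> d' \<le> d1 \<longrightarrow> (\<forall>i\<in>F. P i d')"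
    using insert.IH insert.prems by blast
  obtain d2 where d2: "d2 > 0" "\<forall>d'. 0 < d' \<longrightarrow> d' \<le> d2 \<longrightarrow> P x d'" using insert.prems by blast
  show ?case using d1 d2 by (intro exI[of _ "min d1 d2"]) auto
qed

lemma finite_downclosed:
  assumes "finite I" "\<And>i. i \<in> I \<Longrightarrow> \<exists>d>0. \<forall>d'. 0 < d' \<longrightarrow> d' \<le> d \<longrightarrow> P i d'"
  shows "\<exists>d>(0::real). \<forall>i\<in>I. P i d"
proof -
  obtain d where "d > 0" "\<forall>d'. 0 < d' \<longrightarrow> d' \<le> d \<longrightarrow> (\<forall>i\<in>I. P i d')"
    using finite_downclosed_aux[of I P] assms by blast
  then show ?thesis by auto
qed

lemma powr_small:
  fixes d K :: real assumes "d > 0" "K > 0"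
  shows "eventually (\<lambda>r. r powr d < K) (at_right 0)"
proof -
  have "((\<lambda>r::real. r powr d) \<longlongrightarrow> 0) (at_right 0)"
    by (rule tendsto_zero_powrI) (use assms in \<open>auto intro: tendsto_ident_at eventually_at_right_less simp: eventually_at_right_field\<close>)
  then show ?thesis using assms(2) by (rule order_tendstoD)
qed

lemma poly_nonzero_eventually:
  fixes q :: "complex poly" and w :: complex
  assumes "q \<noteq> 0" "w \<noteq> 0"
  shows "eventually (\<lambda>r. poly q (of_real r * w) \<noteq> 0) (at_right 0)"
proof -
  define F where "F = {r::real. poly q (of_real r * w) = 0}"
  have "inj_on (\<lambda>r::real. of_real r * w) F" using assms(2) by (auto simp: inj_on_def)
  moreover have "(\<lambda>r::real. of_real r * w) ` F \<subseteq> {x. poly q x = 0}" unfolding F_def by auto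
  ultimately have finF: "finite F" using poly_roots_finite[OF assms(1)] finite_imageD finite_subset by metis
  define b where "b = Min (insert 1 {r \<in> F. r > 0})"
  have b0: "b > 0" unfolding b_def using finF by (subst Min_gr_iff) auto
  show ?thesis unfolding eventually_at_right_field
  proof (intro exI[of _ b] conjI allI impI)
    show "b > 0" by (rule b0)
    fix y :: real assume y: "y > 0" "y < b"
    show "poly q (of_real y * w) \<noteq> 0"
    proof
      assume "poly q (of_real y * w) = 0"
      then have "y \<in> {r \<in> F. r > 0}" using y unfolding F_def by auto
      then have "b \<le> y" unfolding b_def using finF by (intro Min_le) auto
      then show False using y by simp
    qed
  qed
qed

lemma imax_eq:
  assumes "f \<noteq> 0"
  shows "Max (fst ` supp2 f) = degree f" "(degree f, degree (coeff f (degree f))) \<in> supp2 f"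
proof -
  have lc: "coeff f (degree f) \<noteq> 0" using assms by simp
  show mem: "(degree f, degree (coeff f (degree f))) \<in> supp2 f" using lc unfolding supp2_def by simp
  have le: "i \<le> degree f" if "(i,j) \<in> supp2 f" for i j
  proof -
    have "coeff f i \<noteq> 0" using that unfolding supp2_def by auto
    then show ?thesis by (rule le_degree)
  qed
  show "Max (fst ` supp2 f) = degree f"
  proof (rule Max_eqI)
    show "finite (fst ` supp2 f)" using supp2_finite by simp
    fix y assume "y \<in> fst ` supp2 f"
    then obtain j where "(y,j) \<in> supp2 f" by force
    then show "y \<le> degree f" using le by blast
  next
    show "degree f \<in> fst ` supp2 f" using mem by force
  qed
qed

lemma g_facts:
  assumes f: "f \<noteq> 0" and w: "w \<noteq> 0"
  shows "eventually (\<lambda>r. eval_y f (of_real r * w) \<noteq> 0 \<and>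
     size (filter_mset (\<lambda>z. z \<noteq> 0) (proots (eval_y f (of_real r * w)))) \<le> Max (fst ` supp2 f) - Min (fst ` supp2 f)) (at_right 0)"
proof -
  have lc: "coeff f (degree f) \<noteq> 0" using f by simp
  show ?thesis using poly_nonzero_eventually[OF lc w]
  proof (rule eventually_mono)
    fix r :: real assume r: "poly (coeff f (degree f)) (of_real r * w) \<noteq> 0"
    define g where "g = eval_y f (of_real r * w)"
    have g0: "g \<noteq> 0"
    proof
      assume "g = 0"
      then have "coeff g (degree f) = 0" by simp
      then show False using r unfolding g_def eval_y_coeff by simp
    qed
    define imin where "imin = Min (fst ` supp2 f)"
    have "size (filter_mset (\<lambda>z. z \<noteq> 0) (proots g)) + size (filter_mset (\<lambda>z. \<not> z \<noteq> 0) (proots g)) = size (proots g)"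
      by (rule size_filter_compl)
    moreover have "size (filter_mset (\<lambda>z. \<not> z \<noteq> 0) (proots g)) = order 0 g"
    proof -
      have "filter_mset (\<lambda>z. \<not> z \<noteq> 0) (proots g) = filter_mset (\<lambda>y. y = 0) (proots g)" by simp
      then have "size (filter_mset (\<lambda>z. \<not> z \<noteq> 0) (proots g)) = count (proots g) 0"
        by (metis count_conv_size_mset)
      then show ?thesis using g0 by simp
    qed
    moreover have "size (proots g) = degree g" by (rule size_proots_complex)
    moreover have "degree g \<le> degree f" unfolding g_def eval_y_def by (rule map_poly_degree_leq)
    moreover have "imin \<le> order 0 g"
    proof -
      have "\<forall>k<imin. coeff g k = 0"
      proof (intro allI impI)
        fix k assume k: "k < imin"
        have "coeff f k = 0"
        proof (rule ccontr)
          assume "coeff f k \<noteq> 0"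
          then have "(k, degree (coeff f k)) \<in> supp2 f" unfolding supp2_def by simp
          then have "k \<in> fst ` supp2 f" by force
          then have "imin \<le> k" unfolding imin_def using supp2_finite by (simp add: Min_le)
          then show False using k by simp
        qed
        then show "coeff g k = 0" unfolding g_def eval_y_coeff by simp
      qed
      then have "monom 1 imin dvd g" by (simp add: monom_1_dvd_iff')
      then show ?thesis using monom_1_dvd_iff[OF g0] by simp
    qed
    ultimately have "size (filter_mset (\<lambda>z. z \<noteq> 0) (proots g)) \<le> degree f - imin" by linarith
    then show "eval_y f (of_real r * w) \<noteq> 0 \<and>
      size (filter_mset (\<lambda>z. z \<noteq> 0) (proots (eval_y f (of_real r * w)))) \<le> Max (fst ` supp2 f) - Min (fst ` supp2 f)"
      using g0 imax_eq[OF f] unfolding g_def imin_def by simp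
  qed
qed

lemma cluster_count:
  assumes f: "f \<noteq> 0" and L: "LEP f e m c" and w: "cmod w = 1"
    and hz: "poly (eval_y (edge_star f e) w) z = 0"
    and d: "\<delta> > 0" "\<delta> < cmod z"
    and iso: "\<And>u. cmod (u - z) \<le> \<delta> \<Longrightarrow> u \<noteq> z \<Longrightarrow> poly (eval_y (edge_star f e) w) u \<noteq> 0"
  shows "eventually (\<lambda>r. size (filter_mset (\<lambda>x. cmod (x - of_real (r powr (-m)) * z) < r powr (-m) * \<delta>)
            (proots (eval_y f (of_real r * w)))) = order z (eval_y (edge_star f e) w)) (at_right 0)"
proof -
  have w0: "w \<noteq> 0" using w by auto
  define h where "h = eval_y (edge_star f e) w"
  define a where "a = edge_left f e"
  define E where "E = edge_supp f e"
  define S where "S = supp2 f"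
  define T where "T = S - E"
  have h0: "h \<noteq> 0" unfolding h_def by (rule edge_poly_props(1)[OF L w0])
  have hsum: "\<And>u. u ^ a * poly h u = (\<Sum>(i,j)\<in>E. coeff (coeff f i) j * w ^ j * u ^ i)"
    unfolding h_def a_def E_def by (rule edge_poly_props(4)[OF L w0])
  have Eiff: "\<And>i j. (i,j) \<in> E \<longleftrightarrow> (i,j) \<in> S \<and> real j = m * real i + c"
    unfolding E_def S_def using LEP_edge_supp[OF L] by auto
  have ES: "E \<subseteq> S" using Eiff by auto
  have finS: "finite S" unfolding S_def by (rule supp2_finite)
  have above: "\<And>i j. (i,j) \<in> S \<Longrightarrow> m * real i + c \<le> real j" using L unfolding LEP_def S_def by blast
  have dpos: "real j - m * real i - c > 0" if "(i,j) \<in> T" for i j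
  proof -
    have "(i,j) \<in> S" "(i,j) \<notin> E" using that unfolding T_def by auto
    then have "m * real i + c \<le> real j" "real j \<noteq> m * real i + c" using above Eiff by auto
    then show ?thesis by linarith
  qed
  define H where "H = monom 1 a * h"
  have H0: "H \<noteq> 0" unfolding H_def using h0 by simp
  have polyH: "\<And>u. poly H u = u ^ a * poly h u" unfolding H_def by (simp add: poly_monom)
  have z0: "z \<noteq> 0" using d by auto
  have ordH: "order z H = order z h"
  proof -
    have "order z (monom 1 a) = 0" by (rule order_0I) (use z0 in \<open>simp add: poly_monom\<close>)
    then show ?thesis unfolding H_def using h0 by (subst order_mult) auto
  qed
  have isoH: "poly H u \<noteq> 0" if "cmod (u - z) \<le> \<delta>" "u \<noteq> z" for u
  proof -
    have "cmod z \<le> cmod u + cmod (u - z)" using norm_triangle_ineq4[of u "u - z"] by simp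
    then have "u \<noteq> 0" using that d by auto
    then show ?thesis using iso[OF that] unfolding polyH h_def by simp
  qed
  obtain u0 where u0: "u0 \<in> sphere z \<delta>" "\<And>u. u \<in> sphere z \<delta> \<Longrightarrow> cmod (poly H u0) \<le> cmod (poly H u)"
  proof -
    have "\<exists>x\<in>sphere z \<delta>. \<forall>y\<in>sphere z \<delta>. cmod (poly H x) \<le> cmod (poly H y)"
      by (rule continuous_attains_inf) (use d in \<open>auto intro!: continuous_intros\<close>)
    then show ?thesis using that by blast
  qed
  define \<eta> where "\<eta> = cmod (poly H u0)"
  have eta: "\<eta> > 0" unfolding \<eta>_def using isoH[of u0] u0(1) d by (auto simp: dist_norm norm_minus_commute)
  define K where "K = cmod z + \<delta>"
  define \<Phi> where "\<Phi> = (\<lambda>r. \<Sum>(i,j)\<in>T. cmod (coeff (coeff f i) j) * K ^ i * r powr (real j - m * real i - c))"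
  have "(\<Phi> \<longlongrightarrow> 0) (at_right 0)" unfolding \<Phi>_def case_prod_unfold
  proof (rule tendsto_null_sum)
    fix ij assume ij: "ij \<in> T"
    have "((\<lambda>r::real. r powr (real (snd ij) - m * real (fst ij) - c)) \<longlongrightarrow> 0) (at_right 0)"
    proof (rule tendsto_zero_powrI)
      show "\<forall>\<^sub>F x in at_right 0. 0 \<le> (x::real)" using eventually_at_right_less by (rule eventually_mono) simp
      show "0 < real (snd ij) - m * real (fst ij) - c" using dpos[of "fst ij" "snd ij"] ij by simp
    qed (auto intro: tendsto_ident_at)
    then have "((\<lambda>r::real. cmod (coeff (coeff f (fst ij)) (snd ij)) * K ^ fst ij * r powr (real (snd ij) - m * real (fst ij) - c))
       \<longlongrightarrow> cmod (coeff (coeff f (fst ij)) (snd ij)) * K ^ fst ij * 0) (at_right 0)"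
      by (intro tendsto_mult tendsto_const)
    then show "((\<lambda>r::real. cmod (coeff (coeff f (fst ij)) (snd ij)) * K ^ fst ij * r powr (real (snd ij) - m * real (fst ij) - c))
       \<longlongrightarrow> 0) (at_right 0)" by simp
  qed
  then have ev1: "eventually (\<lambda>r. \<Phi> r < \<eta>) (at_right 0)" using eta by (rule order_tendstoD)
  have ev2: "eventually (\<lambda>r. eval_y f (of_real r * w) \<noteq> 0) (at_right 0)"
    using g_facts[OF f w0] by (rule eventually_mono) blast
  have ev3: "eventually (\<lambda>r::real. r > 0) (at_right 0)" by (rule eventually_at_right_less)
  show ?thesis using eventually_conj[OF ev1 eventually_conj[OF ev2 ev3]]
  proof (rule eventually_mono)
    fix r :: real assume r: "\<Phi> r < \<eta> \<and> eval_y f (of_real r * w) \<noteq> 0 \<and> r > 0"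
    define Q where "Q = eval_y f (of_real r * w)"
    define \<rho> where "\<rho> = r powr (-m)"
    define lam where "lam = complex_of_real (r powr c)"
    have rp: "r > 0" using r by simp
    have Q0: "Q \<noteq> 0" using r unfolding Q_def by simp
    have rho: "\<rho> > 0" unfolding \<rho>_def using rp by simp
    have lam0: "lam \<noteq> 0" unfolding lam_def using rp by simp
    have dom: "cmod (poly Q (of_real \<rho> * u) - lam * poly H u) < cmod (lam * poly H u)"
      if u: "cmod (u - z) = \<delta>" for u
    proof -
      define tm where "tm = (\<lambda>(i,j). coeff (coeff f i) j * w ^ j * u ^ i * complex_of_real (r powr (real j - m * real i)))"
      have "poly Q (of_real \<rho> * u) = (\<Sum>(i,j)\<in>S. coeff (coeff f i) j * (of_real r * w) ^ j * (of_real \<rho> * u) ^ i)"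
        unfolding Q_def S_def by (rule poly_eval_y_supp)
      also have "\<dots> = (\<Sum>ij\<in>S. tm ij)"
      proof (intro sum.cong refl)
        fix ij assume "ij \<in> S"
        obtain i j where ij: "ij = (i,j)" by (cases ij)
        have "(of_real r * w) ^ j * (of_real \<rho> * u) ^ i = w ^ j * u ^ i * complex_of_real (r ^ j * \<rho> ^ i)"
          by (simp add: power_mult_distrib mult_ac)
        also have "r ^ j * \<rho> ^ i = r powr (real j - m * real i)" unfolding \<rho>_def by (rule powr_mix[OF rp])
        finally show "(case ij of (i, j) \<Rightarrow> coeff (coeff f i) j * (of_real r * w) ^ j * (of_real \<rho> * u) ^ i) = tm ij"
          unfolding tm_def ij by (simp add: mult_ac)
      qed
      also have "\<dots> = (\<Sum>ij\<in>T. tm ij) + (\<Sum>ij\<in>E. tm ij)" unfolding T_def by (rule sum.subset_diff[OF ES finS])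
      also have "(\<Sum>ij\<in>E. tm ij) = lam * poly H u"
      proof -
        have "(\<Sum>ij\<in>E. tm ij) = (\<Sum>(i,j)\<in>E. lam * (coeff (coeff f i) j * w ^ j * u ^ i))"
        proof (intro sum.cong refl)
          fix ij assume ijE: "ij \<in> E"
          obtain i j where ij: "ij = (i,j)" by (cases ij)
          have "real j - m * real i = c" using ijE Eiff ij by auto
          then show "tm ij = (case ij of (i, j) \<Rightarrow> lam * (coeff (coeff f i) j * w ^ j * u ^ i))"
            unfolding tm_def lam_def ij by simp
        qed
        also have "\<dots> = lam * (u ^ a * poly h u)" unfolding hsum sum_distrib_left case_prod_unfold ..
        finally show ?thesis using polyH by simp
      qed
      finally have diff: "poly Q (of_real \<rho> * u) - lam * poly H u = (\<Sum>ij\<in>T. tm ij)" by simp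
      have "cmod u \<le> K" using norm_triangle_ineq[of z "u - z"] u unfolding K_def by simp
      have "cmod (\<Sum>ij\<in>T. tm ij) \<le> (\<Sum>ij\<in>T. cmod (tm ij))" by (rule norm_sum)
      also have "\<dots> \<le> (\<Sum>(i,j)\<in>T. r powr c * (cmod (coeff (coeff f i) j) * K ^ i * r powr (real j - m * real i - c)))"
      proof (intro sum_mono)
        fix ij assume "ij \<in> T"
        obtain i j where ij: "ij = (i,j)" by (cases ij)
        have "cmod (tm ij) = cmod (coeff (coeff f i) j) * cmod u ^ i * r powr (real j - m * real i)"
          unfolding tm_def ij using w by (simp add: norm_mult norm_power)
        also have "\<dots> \<le> cmod (coeff (coeff f i) j) * K ^ i * r powr (real j - m * real i)"
          using \<open>cmod u \<le> K\<close> by (intro mult_right_mono mult_left_mono power_mono) auto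
        also have "r powr (real j - m * real i) = r powr c * r powr (real j - m * real i - c)"
          by (simp add: powr_add[symmetric])
        finally show "cmod (tm ij) \<le> (case ij of (i, j) \<Rightarrow> r powr c * (cmod (coeff (coeff f i) j) * K ^ i * r powr (real j - m * real i - c)))"
          unfolding ij by (simp add: mult_ac)
      qed
      also have "\<dots> = r powr c * \<Phi> r" unfolding \<Phi>_def sum_distrib_left case_prod_unfold ..
      also have "\<dots> < r powr c * \<eta>" using r rp by simp
      also have "\<dots> \<le> r powr c * cmod (poly H u)"
      proof -
        have "u \<in> sphere z \<delta>" using u by (simp add: dist_norm norm_minus_commute)
        then have "\<eta> \<le> cmod (poly H u)" unfolding \<eta>_def by (rule u0(2))
        then show ?thesis using rp by simp
      qed
      also have "\<dots> = cmod (lam * poly H u)" unfolding lam_def using rp by (simp add: norm_mult)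
      finally show ?thesis using diff by simp
    qed
    have "size (filter_mset (\<lambda>x. cmod (x - of_real \<rho> * z) < \<rho> * \<delta>) (proots Q)) = order z H"
      by (rule rouche_count[OF H0 Q0 d(1) rho lam0 dom isoH])
    then show "size (filter_mset (\<lambda>x. cmod (x - of_real (r powr (-m)) * z) < r powr (-m) * \<delta>)
            (proots (eval_y f (of_real r * w)))) = order z (eval_y (edge_star f e) w)"
      using ordH unfolding Q_def \<rho>_def h_def by simp
  qed
qed

lemma image_mset_sum_set: "image_mset f (\<Sum>x\<in>A. g x) = (\<Sum>x\<in>A. image_mset f (g x))"
  by (induction A rule: infinite_finite_induct) auto

lemma disks_disjoint_ev:
  fixes m m' \<delta> :: real and z z' :: complex
  assumes mm: "m < m'" and z: "\<delta> < cmod z / 2" and z': "\<delta> < cmod z' / 2" and d: "\<delta> > 0"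
  shows "eventually (\<lambda>r. \<forall>x. \<not> (cmod (x - of_real (r powr (-m)) * z) < r powr (-m) * \<delta> \<and>
                               cmod (x - of_real (r powr (-m')) * z') < r powr (-m') * \<delta>)) (at_right 0)"
proof -
  have zp: "cmod z > 0" "cmod z' > 0" using z z' d by auto
  have ev: "eventually (\<lambda>r. r powr (m' - m) < cmod z' / (3 * cmod z)) (at_right 0)"
    by (rule powr_small) (use mm zp in auto)
  show ?thesis using eventually_conj[OF ev eventually_at_right_less]
  proof (rule eventually_mono)
    fix r :: real assume r: "r powr (m' - m) < cmod z' / (3 * cmod z) \<and> 0 < r"
    define \<rho> where "\<rho> = r powr (-m)"
    define \<rho>' where "\<rho>' = r powr (-m')"
    define t where "t = r powr (m' - m)"
    have rp: "r > 0" using r by simp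
    have pos: "\<rho> > 0" "\<rho>' > 0" "t > 0" unfolding \<rho>_def \<rho>'_def t_def using rp by auto
    have rt: "\<rho> = \<rho>' * t" unfolding \<rho>_def \<rho>'_def t_def by (simp add: powr_add[symmetric])
    show "\<forall>x. \<not> (cmod (x - of_real (r powr (-m)) * z) < r powr (-m) * \<delta> \<and>
                 cmod (x - of_real (r powr (-m')) * z') < r powr (-m') * \<delta>)"
    proof (intro allI notI)
      fix x assume x: "cmod (x - of_real (r powr (-m)) * z) < r powr (-m) * \<delta> \<and>
                 cmod (x - of_real (r powr (-m')) * z') < r powr (-m') * \<delta>"
      then have x1: "cmod (x - of_real \<rho> * z) < \<rho> * \<delta>" and x2: "cmod (x - of_real \<rho>' * z') < \<rho>' * \<delta>"
        unfolding \<rho>_def \<rho>'_def by auto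
      have n1: "cmod (of_real \<rho> * z) = \<rho> * cmod z" using pos by (simp add: norm_mult)
      have n2: "cmod (of_real \<rho>' * z') = \<rho>' * cmod z'" using pos by (simp add: norm_mult)
      have "cmod x \<le> cmod (of_real \<rho> * z) + cmod (x - of_real \<rho> * z)"
        using norm_triangle_ineq[of "of_real \<rho> * z" "x - of_real \<rho> * z"] by simp
      moreover have "cmod (of_real \<rho>' * z') \<le> cmod x + cmod (x - of_real \<rho>' * z')"
        using norm_triangle_ineq4[of x "x - of_real \<rho>' * z'"] by simp
      moreover have "\<rho> * \<delta> < \<rho> * (cmod z / 2)" using pos z by simp
      moreover have "\<rho>' * \<delta> < \<rho>' * (cmod z' / 2)" using pos z' by simp
      ultimately have "\<rho>' * cmod z' < 3 * (\<rho> * cmod z)" using x1 x2 n1 n2 by linarith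
      also have "3 * (\<rho> * cmod z) = \<rho>' * (3 * t * cmod z)" using rt by simp
      also have "\<rho>' * (3 * t * cmod z) < \<rho>' * cmod z'"
      proof -
        have "t < cmod z' / (3 * cmod z)" using r unfolding t_def by simp
        then have "3 * t * cmod z < cmod z'" using zp by (simp add: field_simps)
        then show ?thesis using pos by simp
      qed
      finally have "\<rho>' * cmod z' < \<rho>' * cmod z'" .
      then show False by simp
    qed
  qed
qed

lemma proots_as_sum:
  assumes "p \<noteq> 0"
  shows "proots p = (\<Sum>z\<in>{z. poly p z = 0}. replicate_mset (order z p) z)"
proof (rule multiset_eqI)
  fix x
  have fin: "finite {z. poly p z = 0}" using poly_roots_finite[OF assms] .
  have "count (\<Sum>z\<in>{z. poly p z = 0}. replicate_mset (order z p) z) x =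
        (\<Sum>z\<in>{z. poly p z = 0}. if x = z then order z p else 0)" by (simp add: count_sum)
  also have "\<dots> = (if poly p x = 0 then order x p else 0)"
    using fin by (simp add: sum.delta eq_commute[of x])
  also have "\<dots> = count (proots p) x" using assms by (auto simp: order_0I)
  finally show "count (proots p) x = count (\<Sum>z\<in>{z. poly p z = 0}. replicate_mset (order z p) z) x" by simp
qed

lemma main_w:
  assumes f: "f \<noteq> 0" and w: "cmod w = 1"
  shows "\<exists>r0>0. \<forall>r. 0 < r \<and> r < r0 \<longrightarrow>
           \<bar>B (eval_y f (complex_of_real r * w)) - B (eval_y (fstar f) w)\<bar> < 1"
proof -
  have w0: "w \<noteq> 0" using w by auto
  define LE where "LE = lower_edges f"
  have finLE: "finite LE" unfolding LE_def by (rule lower_edges_finite)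
  define prm where "prm = (\<lambda>e. SOME mc. LEP f e (fst mc) (snd mc))"
  define mE where "mE = (\<lambda>e. fst (prm e))"
  define cE where "cE = (\<lambda>e. snd (prm e))"
  have LEPe: "LEP f e (mE e) (cE e)" if eLE: "e \<in> LE" for e
  proof -
    obtain m c where "LEP f e m c" using lower_LEP[of e f] eLE unfolding LE_def by blast
    then have "\<exists>mc. LEP f e (fst mc) (snd mc)" by (intro exI[of _ "(m,c)"]) simp
    then show ?thesis unfolding mE_def cE_def prm_def by (rule someI_ex)
  qed
  define h where "h = (\<lambda>e. eval_y (edge_star f e) w)"
  have h0: "h e \<noteq> 0" if "e \<in> LE" for e unfolding h_def by (rule edge_poly_props(1)[OF LEPe[OF that] w0])
  have hdeg: "degree (h e) = rgt f e - edge_left f e" if "e \<in> LE" for e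
    unfolding h_def by (rule edge_poly_props(2)[OF LEPe[OF that] w0])
  have hz0: "poly (h e) 0 \<noteq> 0" if "e \<in> LE" for e unfolding h_def by (rule edge_poly_props(3)[OF LEPe[OF that] w0])
  define R where "R = (\<lambda>e. {z. poly (h e) z = 0})"
  have finR: "finite (R e)" if "e \<in> LE" for e unfolding R_def using poly_roots_finite[OF h0[OF that]] .
  define C where "C = Sigma LE R"
  have finC: "finite C" unfolding C_def using finLE finR by auto
  have Cz0: "snd c \<noteq> 0" if "c \<in> C" for c using that hz0 unfolding C_def R_def by auto
  define N where "N = (\<Sum>e\<in>LE. rgt f e - edge_left f e)"
  have suppne: "supp2 f \<noteq> {}" using imax_eq(2)[OF f] by auto
  have Neq: "N = Max (fst ` supp2 f) - Min (fst ` supp2 f)" unfolding N_def LE_def by (rule sum_widths[OF suppne])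
  define \<epsilon> where "\<epsilon> = pi / (real N + 1)"
  have eps: "\<epsilon> > 0" unfolding \<epsilon>_def by simp
  define P where "P = (\<lambda>c d. d < cmod (snd c) / 2 \<and> (\<forall>z'\<in>R (fst c). z' \<noteq> snd c \<longrightarrow> 2 * d < cmod (snd c - z'))
      \<and> (\<forall>u. cmod (u - snd c) < d \<longrightarrow> close \<epsilon> (Arg2pi u) (Arg2pi (snd c))))"
  obtain \<delta> where dpos: "\<delta> > 0" and dP: "\<And>c. c \<in> C \<Longrightarrow> P c \<delta>"
  proof -
    have "\<exists>d>(0::real). \<forall>c\<in>C. P c d"
    proof (rule finite_downclosed[OF finC])
      fix c assume c: "c \<in> C"
      have cz: "snd c \<noteq> 0" using Cz0[OF c] .
      have fc: "fst c \<in> LE" using c unfolding C_def by auto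
      obtain da where da: "da > 0" "\<forall>u. cmod (u - snd c) < da \<longrightarrow> close \<epsilon> (Arg2pi u) (Arg2pi (snd c))"
        using angle_close[OF cz eps] by blast
      obtain ds where ds: "ds > 0" "\<forall>z'\<in>R (fst c) - {snd c}. 2 * ds < cmod (snd c - z')"
      proof -
        have "\<exists>d>(0::real). \<forall>z'\<in>R (fst c) - {snd c}. 2 * d < cmod (snd c - z')"
        proof (rule finite_downclosed)
          show "finite (R (fst c) - {snd c})" using finR[OF fc] by simp
          fix z' assume "z' \<in> R (fst c) - {snd c}"
          then have "cmod (snd c - z') > 0" by auto
          then show "\<exists>d>0. \<forall>d'. 0 < d' \<longrightarrow> d' \<le> d \<longrightarrow> 2 * d' < cmod (snd c - z')"
            by (intro exI[of _ "cmod (snd c - z') / 3"]) auto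
        qed
        then show ?thesis using that by blast
      qed
      show "\<exists>d>0. \<forall>d'. 0 < d' \<longrightarrow> d' \<le> d \<longrightarrow> P c d'"
      proof (intro exI[of _ "min (cmod (snd c) / 3) (min ds da)"] conjI allI impI)
        show "0 < min (cmod (snd c) / 3) (min ds da)" using cz ds da by simp
        fix d' assume d': "0 < d'" "d' \<le> min (cmod (snd c) / 3) (min ds da)"
        show "P c d'" unfolding P_def
        proof (intro conjI ballI impI allI)
          show "d' < cmod (snd c) / 2" using d' cz by simp
          fix z' assume "z' \<in> R (fst c)" "z' \<noteq> snd c"
          then show "2 * d' < cmod (snd c - z')" using ds d' by force
        next
          fix u assume "cmod (u - snd c) < d'"
          then show "close \<epsilon> (Arg2pi u) (Arg2pi (snd c))" using da d' by auto
        qed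
      qed
    qed
    then show ?thesis using that by blast
  qed
  define g where "g = (\<lambda>r::real. eval_y f (of_real r * w))"
  define Dk where "Dk = (\<lambda>r c x. cmod (x - of_real (r powr (- mE (fst c))) * snd c) < r powr (- mE (fst c)) * \<delta>)"
  have ev1: "eventually (\<lambda>r. g r \<noteq> 0 \<and> size (filter_mset (\<lambda>z. z \<noteq> 0) (proots (g r))) \<le> N) (at_right 0)"
    using g_facts[OF f w0] unfolding g_def Neq .
  have ev2: "eventually (\<lambda>r. \<forall>c\<in>C. size (filter_mset (Dk r c) (proots (g r))) = order (snd c) (h (fst c))) (at_right 0)"
  proof (rule eventually_ball_finite[OF finC], intro ballI)
    fix c assume c: "c \<in> C"
    have fc: "fst c \<in> LE" and rc: "snd c \<in> R (fst c)" using c unfolding C_def by auto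
    have Pc: "P c \<delta>" by (rule dP[OF c])
    have "eventually (\<lambda>r. size (filter_mset (\<lambda>x. cmod (x - of_real (r powr (- mE (fst c))) * snd c) < r powr (- mE (fst c)) * \<delta>)
            (proots (eval_y f (of_real r * w)))) = order (snd c) (eval_y (edge_star f (fst c)) w)) (at_right 0)"
    proof (rule cluster_count[OF f LEPe[OF fc] w])
      show "poly (eval_y (edge_star f (fst c)) w) (snd c) = 0" using rc unfolding R_def h_def by simp
      show "\<delta> > 0" by (rule dpos)
      show "\<delta> < cmod (snd c)" using Pc dpos unfolding P_def by linarith
      fix u assume u: "cmod (u - snd c) \<le> \<delta>" "u \<noteq> snd c"
      show "poly (eval_y (edge_star f (fst c)) w) u \<noteq> 0"
      proof
        assume "poly (eval_y (edge_star f (fst c)) w) u = 0"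
        then have "u \<in> R (fst c)" unfolding R_def h_def by simp
        then have "2 * \<delta> < cmod (snd c - u)" using Pc u unfolding P_def by auto
        then show False using u dpos by (simp add: norm_minus_commute)
      qed
    qed
    then show "eventually (\<lambda>r. size (filter_mset (Dk r c) (proots (g r))) = order (snd c) (h (fst c))) (at_right 0)"
      unfolding Dk_def g_def h_def .
  qed
  have ev3: "eventually (\<lambda>r. \<forall>cc\<in>C \<times> C. fst (fst cc) \<noteq> fst (snd cc) \<longrightarrow> (\<forall>x. \<not> (Dk r (fst cc) x \<and> Dk r (snd cc) x))) (at_right 0)"
  proof (rule eventually_ball_finite, use finC in simp, intro ballI)
    fix cc assume cc: "cc \<in> C \<times> C"
    obtain c c' where ccc: "cc = (c, c')" by (cases cc)
    have c: "c \<in> C" "c' \<in> C" using cc ccc by auto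
    have fc: "fst c \<in> LE" "fst c' \<in> LE" using c unfolding C_def by auto
    show "eventually (\<lambda>r. fst (fst cc) \<noteq> fst (snd cc) \<longrightarrow> (\<forall>x. \<not> (Dk r (fst cc) x \<and> Dk r (snd cc) x))) (at_right 0)"
    proof (cases "fst c = fst c'")
      case True then show ?thesis unfolding ccc by simp
    next
      case False
      have mne: "mE (fst c) \<noteq> mE (fst c')"
      proof
        assume eq: "mE (fst c) = mE (fst c')"
        have "LEP f (fst c') (mE (fst c)) (cE (fst c'))" using LEPe[OF fc(2)] eq by simp
        then have "fst c = fst c'" by (rule LEP_same_slope[OF LEPe[OF fc(1)]])
        then show False using False by simp
      qed
      have d1: "\<delta> < cmod (snd c) / 2" "\<delta> < cmod (snd c') / 2" using dP[OF c(1)] dP[OF c(2)] unfolding P_def by auto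
      have "eventually (\<lambda>r. \<forall>x. \<not> (Dk r c x \<and> Dk r c' x)) (at_right 0)"
      proof (cases "mE (fst c) < mE (fst c')")
        case True
        show ?thesis using disks_disjoint_ev[OF True d1 dpos] unfolding Dk_def .
      next
        case False
        then have lt: "mE (fst c') < mE (fst c)" using mne by simp
        show ?thesis using disks_disjoint_ev[OF lt d1(2) d1(1) dpos] unfolding Dk_def
          by (rule eventually_mono) blast
      qed
      then show ?thesis unfolding ccc by (rule eventually_mono) simp
    qed
  qed
  obtain r0 where r0: "r0 > 0" and r0P: "\<And>r. r > 0 \<Longrightarrow> r < r0 \<Longrightarrow>
      (g r \<noteq> 0 \<and> size (filter_mset (\<lambda>z. z \<noteq> 0) (proots (g r))) \<le> N) \<and>
      (\<forall>c\<in>C. size (filter_mset (Dk r c) (proots (g r))) = order (snd c) (h (fst c))) \<and>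
      (\<forall>cc\<in>C \<times> C. fst (fst cc) \<noteq> fst (snd cc) \<longrightarrow> (\<forall>x. \<not> (Dk r (fst cc) x \<and> Dk r (snd cc) x)))"
    using eventually_conj[OF ev1 eventually_conj[OF ev2 ev3]] unfolding eventually_at_right_field by blast
  show ?thesis
  proof (intro exI[of _ r0] conjI allI impI)
    show "r0 > 0" by (rule r0)
    fix r assume rr: "0 < r \<and> r < r0"
    have rp: "r > 0" using rr by simp
    note props = r0P[OF rp conjunct2[OF rr]]
    define G where "G = g r"
    have G0: "G \<noteq> 0" using props unfolding G_def by blast
    define A where "A = filter_mset (\<lambda>z. z \<noteq> 0) (proots G)"
    have sizeA: "size A \<le> N" using props unfolding A_def G_def by blast
    define Ac where "Ac = (\<lambda>c. filter_mset (Dk r c) (proots G))"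
    have sizeAc: "size (Ac c) = order (snd c) (h (fst c))" if "c \<in> C" for c
      using props that unfolding Ac_def G_def by blast
    define \<rho> where "\<rho> = (\<lambda>c::(real \<times> real) set \<times> complex. r powr (- mE (fst c)))"
    have rho: "\<rho> c > 0" for c unfolding \<rho>_def using rp by simp
    have Dk': "Dk r c x \<longleftrightarrow> cmod (x - of_real (\<rho> c) * snd c) < \<rho> c * \<delta>" for c x
      unfolding Dk_def \<rho>_def ..
    have dk0: "x \<noteq> 0" if c: "c \<in> C" and x: "Dk r c x" for c x
    proof
      assume "x = 0"
      then have "\<rho> c * cmod (snd c) < \<rho> c * \<delta>" using x rho[of c] unfolding Dk' by (simp add: norm_mult)
      then have "cmod (snd c) < \<delta>" using rho[of c] by simp
      then show False using dP[OF c] dpos unfolding P_def by linarith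
    qed
    have disj: False if c: "c \<in> C" "c' \<in> C" "c \<noteq> c'" and x: "Dk r c x" "Dk r c' x" for c c' x
    proof (cases "fst c = fst c'")
      case True
      then have ne: "snd c \<noteq> snd c'" using c(3) by (metis prod_eqI)
      have "snd c' \<in> R (fst c)" using c(2) True unfolding C_def by auto
      then have sep: "2 * \<delta> < cmod (snd c - snd c')" using dP[OF c(1)] ne unfolding P_def by auto
      have rr': "\<rho> c' = \<rho> c" unfolding \<rho>_def using True by simp
      have "cmod (of_real (\<rho> c) * snd c - of_real (\<rho> c) * snd c') \<le>
            cmod (x - of_real (\<rho> c) * snd c) + cmod (x - of_real (\<rho> c) * snd c')"
        using norm_triangle_ineq4[of "x - of_real (\<rho> c) * snd c'" "x - of_real (\<rho> c) * snd c"]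
        by (simp add: norm_minus_commute)
      also have "\<dots> < \<rho> c * \<delta> + \<rho> c * \<delta>" using x unfolding Dk' rr' by (intro add_strict_mono)
      finally have "\<rho> c * cmod (snd c - snd c') < \<rho> c * (2 * \<delta>)"
        using rho[of c] by (simp add: right_diff_distrib[symmetric] norm_mult)
      then have "cmod (snd c - snd c') < 2 * \<delta>" using rho[of c] by simp
      then show False using sep by simp
    next
      case False
      have H3: "\<forall>cc\<in>C \<times> C. fst (fst cc) \<noteq> fst (snd cc) \<longrightarrow> (\<forall>x. \<not> (Dk r (fst cc) x \<and> Dk r (snd cc) x))"
        using props by blast
      have "(c, c') \<in> C \<times> C" using c by simp
      then have "\<forall>x. \<not> (Dk r c x \<and> Dk r c' x)" using bspec[OF H3] False by fastforce
      then show False using x by blast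
    qed
    define SA where "SA = (\<Sum>c\<in>C. Ac c)"
    have sub: "SA \<subseteq># A"
    proof (rule mset_subset_eqI)
      fix x
      have cSA: "count SA x = (\<Sum>c\<in>C. if Dk r c x then count (proots G) x else 0)"
        unfolding SA_def Ac_def by (simp add: count_sum)
      show "count SA x \<le> count A x"
      proof (cases "\<exists>c0\<in>C. Dk r c0 x")
        case True
        then obtain c0 where c0: "c0 \<in> C" "Dk r c0 x" by blast
        have "count SA x = (\<Sum>c\<in>C. if c = c0 then count (proots G) x else 0)"
          unfolding cSA
        proof (intro sum.cong refl)
          fix c assume "c \<in> C"
          then show "(if Dk r c x then count (proots G) x else 0) = (if c = c0 then count (proots G) x else 0)"
            using disj[of c c0 x] c0 by auto
        qed
        also have "\<dots> = count (proots G) x" using c0 finC by simp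
        also have "\<dots> = count A x" unfolding A_def using dk0[OF c0] by simp
        finally show ?thesis by simp
      next
        case False
        then have "count SA x = 0" unfolding cSA by (intro sum.neutral) auto
        then show ?thesis by simp
      qed
    qed
    have ordsum: "(\<Sum>z\<in>R e. order z (h e)) = degree (h e)" if e: "e \<in> LE" for e
    proof -
      have "size (filter_mset (\<lambda>_. True) (proots (h e))) = (\<Sum>x\<in>{x. poly (h e) x = 0 \<and> True}. order x (h e))"
        by (rule size_filter_proots[OF h0[OF e]])
      then show ?thesis unfolding R_def by (simp add: size_proots_complex)
    qed
    have sizeSA: "size SA = N"
    proof -
      have "size SA = (\<Sum>c\<in>C. order (snd c) (h (fst c)))" unfolding SA_def using sizeAc by simp
      also have "\<dots> = (\<Sum>e\<in>LE. \<Sum>z\<in>R e. order z (h e))"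
        unfolding C_def by (subst sum.Sigma[OF finLE]) (use finR in \<open>auto simp: case_prod_unfold\<close>)
      also have "\<dots> = (\<Sum>e\<in>LE. rgt f e - edge_left f e)" using ordsum hdeg by simp
      finally show ?thesis unfolding N_def .
    qed
    have SAeq: "SA = A"
    proof (rule ccontr)
      assume "SA \<noteq> A"
      then have "SA \<subset># A" using sub by (simp add: subset_mset.le_neq_trans)
      then have "size SA < size A" by (rule mset_subset_size)
      then show False using sizeSA sizeA by simp
    qed
    define M where "M = (\<Sum>c\<in>C. image_mset (\<lambda>x. (x, snd c)) (Ac c))"
    have fstM: "image_mset fst M = A"
      unfolding M_def image_mset_sum_set SAeq[symmetric] SA_def by (simp add: multiset.map_comp comp_def)
    define hh where "hh = eval_y (fstar f) w"
    have hh_prod: "hh = (\<Prod>e\<in>LE. h e)" unfolding hh_def fstar_def eval_y_prod LE_def h_def ..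
    have hh0: "hh \<noteq> 0" unfolding hh_prod using h0 finLE by auto
    have proots_hh: "proots hh = (\<Sum>e\<in>LE. proots (h e))" unfolding hh_prod by (rule proots_prod) (use h0 in auto)
    have nz_hh: "filter_mset (\<lambda>z. z \<noteq> 0) (proots hh) = proots hh"
    proof -
      have "poly hh 0 \<noteq> 0" unfolding hh_prod poly_prod using hz0 finLE by auto
      then have "\<forall>x\<in>#proots hh. x \<noteq> 0" using hh0 by auto
      then show ?thesis by (simp add: filter_mset_eq_conv)
    qed
    have sndM: "image_mset snd M = filter_mset (\<lambda>z. z \<noteq> 0) (proots hh)"
    proof -
      have "image_mset snd M = (\<Sum>c\<in>C. replicate_mset (order (snd c) (h (fst c))) (snd c))"
        unfolding M_def image_mset_sum_set
        by (intro sum.cong refl) (simp add: multiset.map_comp comp_def image_mset_const_eq sizeAc)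
      also have "\<dots> = (\<Sum>e\<in>LE. \<Sum>z\<in>R e. replicate_mset (order z (h e)) z)"
        unfolding C_def by (subst sum.Sigma[OF finLE]) (use finR in \<open>auto simp: case_prod_unfold\<close>)
      also have "\<dots> = (\<Sum>e\<in>LE. proots (h e))"
        by (intro sum.cong refl) (simp add: proots_as_sum[OF h0] R_def)
      finally show ?thesis using proots_hh nz_hh by simp
    qed
    have cl: "close \<epsilon> (Arg2pi (fst p)) (Arg2pi (snd p))" if p: "p \<in># M" for p
    proof -
      obtain c where c: "c \<in> C" "p \<in># image_mset (\<lambda>x. (x, snd c)) (Ac c)"
      proof -
        have "count M p > 0" using p by simp
        then have "(\<Sum>c\<in>C. count (image_mset (\<lambda>x. (x, snd c)) (Ac c)) p) > 0" unfolding M_def by (simp add: count_sum)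
        then obtain c where "c \<in> C" "count (image_mset (\<lambda>x. (x, snd c)) (Ac c)) p > 0"
        proof -
          assume pos: "(\<Sum>c\<in>C. count (image_mset (\<lambda>x. (x, snd c)) (Ac c)) p) > 0"
          show ?thesis
          proof (rule ccontr)
            assume "\<not> thesis"
            then have "\<forall>c\<in>C. count (image_mset (\<lambda>x. (x, snd c)) (Ac c)) p = 0" using that by (meson not_gr0)
            then have "(\<Sum>c\<in>C. count (image_mset (\<lambda>x. (x, snd c)) (Ac c)) p) = 0" by simp
            then show False using pos by simp
          qed
        qed
        then show ?thesis using that by auto
      qed
      then obtain x where x: "x \<in># Ac c" "p = (x, snd c)" by auto
      have Dx: "cmod (x - of_real (\<rho> c) * snd c) < \<rho> c * \<delta>" using x(1) unfolding Ac_def Dk' by simp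
      have "cmod (x / of_real (\<rho> c) - snd c) = cmod (x - of_real (\<rho> c) * snd c) / \<rho> c"
      proof -
        have "x / of_real (\<rho> c) - snd c = (x - of_real (\<rho> c) * snd c) / of_real (\<rho> c)"
          using rho[of c] by (simp add: field_simps)
        then show ?thesis using rho[of c] by (simp add: norm_divide)
      qed
      also have "\<dots> < \<delta>" using Dx rho[of c] by (simp add: pos_divide_less_eq mult.commute)
      finally have "close \<epsilon> (Arg2pi (x / of_real (\<rho> c))) (Arg2pi (snd c))" using dP[OF c(1)] unfolding P_def by blast
      then show ?thesis using x rho[of c] by simp
    qed
    have "\<bar>Bm A - Bm (filter_mset (\<lambda>z. z \<noteq> 0) (proots hh))\<bar> \<le> real (size A) * \<epsilon> / pi"
      by (rule Bm_close[OF fstM sndM cl eps])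
    also have "real (size A) * \<epsilon> / pi = real (size A) / (real N + 1)" unfolding \<epsilon>_def by simp
    also have "\<dots> < 1" using sizeA by (simp add: divide_less_eq)
    finally have "\<bar>Bm A - Bm (filter_mset (\<lambda>z. z \<noteq> 0) (proots hh))\<bar> < 1" .
    moreover have "B (eval_y f (complex_of_real r * w)) = Bm A" unfolding A_def G_def g_def by (rule B_Bm[OF G0[unfolded G_def g_def]])
    moreover have "B (eval_y (fstar f) w) = Bm (filter_mset (\<lambda>z. z \<noteq> 0) (proots hh))" unfolding hh_def
      by (rule B_Bm[OF hh0[unfolded hh_def]])
    ultimately show "\<bar>B (eval_y f (complex_of_real r * w)) - B (eval_y (fstar f) w)\<bar> < 1" by simp
  qed
qed

theorem lemma5p3:
  fixes f :: "complex poly poly"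
  assumes "f \<noteq> 0"
  shows "\<forall>\<phi>\<in>{0..<2*pi}. \<exists>r0>0. \<forall>r. 0 < r \<and> r < r0 \<longrightarrow>
           \<bar>B (eval_y f (complex_of_real r * cis \<phi>)) - B (eval_y (fstar f) (cis \<phi>))\<bar> < 1"
proof
  fix \<phi> :: real
  show "\<exists>r0>0. \<forall>r. 0 < r \<and> r < r0 \<longrightarrow>
           \<bar>B (eval_y f (complex_of_real r * cis \<phi>)) - B (eval_y (fstar f) (cis \<phi>))\<bar> < 1"
    by (rule main_w[OF assms]) simp
qed

end
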